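(* Let $V$ be a near vector space over a commutative $F$ with finitely many blocks. Then the complete theory $\mathrm{Th}(V)$ of $V$ in the language $\mathcal L_{Fnvs}=\{+,0,(\lambda)_{\lambda\in F}\}$ admits quantifier elimination (equivalently in $\mathcal L_{\bar Fnvs}$, whose extra symbols are quantifier-free definable).
   Context: A near vector space $(V,F)$: $(V,+)$ a group, $F$ a set of endomorphisms containing $0,1,-1$, with $F\setminus\{0\}$ a subgroup of $\mathrm{Aut}(V,+)$ acting fixed point freely ($\alpha x=\beta x\Rightarrow\alpha=\beta$ or $x=0$), such that the quasi-kernel $Q(V)=\{u:\forall\alpha,\beta\in F\,\exists\gamma\in F\ \alpha u+\beta u=\gamma u\}$ generates $V$. Commutative: $\alpha(\beta v)=\beta(\alpha v)$ for all $\alpha,\beta\in F$, $v\in V$. The blocks of $V$ are the summands in André's decomposition of $V$ into maximal regular near vector subspaces (regular: any two nonzero quasi-kernel elements $u,v$ satisfy $u+\lambda v\in Q(V)$ for some $\lambda\neq0$), each nonzero element of $Q(V)$ lying in exactly one block; for commutative $F$ each block is a vector space over a field $(F,+_i,\circ)$. In $\mathcal L_{Fnvs}$ each $\lambda\in F$ is a unary function symbol interpreted as its action; $\bar F$ is the set of formal finite sums of elements of $F$ acting by pointwise sums, and $\mathcal L_{\bar Fnvs}=\{+,0,(\lambda)_{\lambda\in\bar F}\}$. *)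

theory Defs
  imports Main
begin

text \<open>The additive group (V,+) is the type 'v (class group_add, not assumed abelian);
  F is a set of maps V -> V.\<close>

definition gen_subgroup :: "'v::group_add set \<Rightarrow> 'v set" where
  "gen_subgroup S = \<Inter>{H. 0 \<in> H \<and> (\<forall>x\<in>H. \<forall>y\<in>H. x + y \<in> H) \<and> (\<forall>x\<in>H. - x \<in> H) \<and> S \<subseteq> H}"

definition quasi_kernel :: "('v::group_add \<Rightarrow> 'v) set \<Rightarrow> 'v set" where
  "quasi_kernel F = {u. \<forall>\<alpha>\<in>F. \<forall>\<beta>\<in>F. \<exists>\<gamma>\<in>F. \<alpha> u + \<beta> u = \<gamma> u}"

definition near_vector_space :: "('v::group_add \<Rightarrow> 'v) set \<Rightarrow> bool" where
  "near_vector_space F \<longleftrightarrow>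
     (\<forall>\<alpha>\<in>F. \<forall>x y. \<alpha> (x + y) = \<alpha> x + \<alpha> y) \<and>
     (\<lambda>x. 0) \<in> F \<and> id \<in> F \<and> uminus \<in> F \<and>
     (\<forall>\<alpha>\<in>F - {\<lambda>x. 0}. bij \<alpha> \<and> inv \<alpha> \<in> F) \<and>
     (\<forall>\<alpha>\<in>F - {\<lambda>x. 0}. \<forall>\<beta>\<in>F - {\<lambda>x. 0}. \<alpha> \<circ> \<beta> \<in> F) \<and>
     (\<forall>\<alpha>\<in>F. \<forall>\<beta>\<in>F. \<forall>x. \<alpha> x = \<beta> x \<longrightarrow> \<alpha> = \<beta> \<or> x = 0) \<and>
     gen_subgroup (quasi_kernel F) = UNIV"

definition commutative_nvs :: "('v::group_add \<Rightarrow> 'v) set \<Rightarrow> bool" where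
  "commutative_nvs F \<longleftrightarrow> (\<forall>\<alpha>\<in>F. \<forall>\<beta>\<in>F. \<forall>v. \<alpha> (\<beta> v) = \<beta> (\<alpha> v))"

text \<open>Near vector subspaces, regularity, blocks (maximal regular near vector subspaces).
  For a subspace W, Q(W) = Q(V) \<inter> W, since the defining condition only involves u and F.\<close>

definition nv_subspace :: "('v::group_add \<Rightarrow> 'v) set \<Rightarrow> 'v set \<Rightarrow> bool" where
  "nv_subspace F W \<longleftrightarrow>
     0 \<in> W \<and> (\<forall>x\<in>W. \<forall>y\<in>W. x + y \<in> W) \<and> (\<forall>x\<in>W. - x \<in> W) \<and>
     (\<forall>\<alpha>\<in>F. \<forall>x\<in>W. \<alpha> x \<in> W) \<and>
     gen_subgroup (quasi_kernel F \<inter> W) = W"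

definition regular_subspace :: "('v::group_add \<Rightarrow> 'v) set \<Rightarrow> 'v set \<Rightarrow> bool" where
  "regular_subspace F W \<longleftrightarrow> nv_subspace F W \<and>
     (\<forall>u\<in>quasi_kernel F \<inter> W - {0}. \<forall>v\<in>quasi_kernel F \<inter> W - {0}.
        \<exists>c\<in>F - {\<lambda>x. 0}. u + c v \<in> quasi_kernel F)"

definition is_block :: "('v::group_add \<Rightarrow> 'v) set \<Rightarrow> 'v set \<Rightarrow> bool" where
  "is_block F W \<longleftrightarrow> regular_subspace F W \<and>
     (\<forall>W'. regular_subspace F W' \<and> W \<subseteq> W' \<longrightarrow> W' = W)"

text \<open>Unary function symbols are labelled by elements of type 'f; a term/formula is in the
  language L_Fnvs iff all labels belong to F.\<close>

datatype 'f tm = Var nat | Zero | Plus "'f tm" "'f tm" | Scal 'f "'f tm"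

datatype 'f fm = Eq "'f tm" "'f tm" | Neg "'f fm" | Conj "'f fm" "'f fm" | Ex nat "'f fm"

primrec tm_syms :: "'f tm \<Rightarrow> 'f set" where
  "tm_syms (Var n) = {}"
| "tm_syms Zero = {}"
| "tm_syms (Plus s t) = tm_syms s \<union> tm_syms t"
| "tm_syms (Scal f t) = insert f (tm_syms t)"

primrec fm_syms :: "'f fm \<Rightarrow> 'f set" where
  "fm_syms (Eq s t) = tm_syms s \<union> tm_syms t"
| "fm_syms (Neg \<phi>) = fm_syms \<phi>"
| "fm_syms (Conj \<phi> \<psi>) = fm_syms \<phi> \<union> fm_syms \<psi>"
| "fm_syms (Ex n \<phi>) = fm_syms \<phi>"

primrec tm_vars :: "'f tm \<Rightarrow> nat set" where
  "tm_vars (Var n) = {n}"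
| "tm_vars Zero = {}"
| "tm_vars (Plus s t) = tm_vars s \<union> tm_vars t"
| "tm_vars (Scal f t) = tm_vars t"

primrec free_vars :: "'f fm \<Rightarrow> nat set" where
  "free_vars (Eq s t) = tm_vars s \<union> tm_vars t"
| "free_vars (Neg \<phi>) = free_vars \<phi>"
| "free_vars (Conj \<phi> \<psi>) = free_vars \<phi> \<union> free_vars \<psi>"
| "free_vars (Ex n \<phi>) = free_vars \<phi> - {n}"

primrec qfree :: "'f fm \<Rightarrow> bool" where
  "qfree (Eq s t) = True"
| "qfree (Neg \<phi>) = qfree \<phi>"
| "qfree (Conj \<phi> \<psi>) = (qfree \<phi> \<and> qfree \<psi>)"
| "qfree (Ex n \<phi>) = False"

primrec tm_eval :: "(nat \<Rightarrow> 'v::group_add) \<Rightarrow> ('v \<Rightarrow> 'v) tm \<Rightarrow> 'v" where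
  "tm_eval e (Var n) = e n"
| "tm_eval e Zero = 0"
| "tm_eval e (Plus s t) = tm_eval e s + tm_eval e t"
| "tm_eval e (Scal f t) = f (tm_eval e t)"

primrec sat :: "(nat \<Rightarrow> 'v::group_add) \<Rightarrow> ('v \<Rightarrow> 'v) fm \<Rightarrow> bool" where
  "sat e (Eq s t) = (tm_eval e s = tm_eval e t)"
| "sat e (Neg \<phi>) = (\<not> sat e \<phi>)"
| "sat e (Conj \<phi> \<psi>) = (sat e \<phi> \<and> sat e \<psi>)"
| "sat e (Ex n \<phi>) = (\<exists>x. sat (e(n := x)) \<phi>)"

text \<open>Th(V) admits quantifier elimination: every L_Fnvs-formula is equivalent modulo Th(V)
  (i.e. equivalent in V, as Th(V) is the complete theory of V) to a quantifier-free
  L_Fnvs-formula with no new free variables.\<close>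

definition admits_QE :: "('v::group_add \<Rightarrow> 'v) set \<Rightarrow> bool" where
  "admits_QE F \<longleftrightarrow> (\<forall>\<phi>. fm_syms \<phi> \<subseteq> F \<longrightarrow>
     (\<exists>\<psi>. qfree \<psi> \<and> fm_syms \<psi> \<subseteq> F \<and> free_vars \<psi> \<subseteq> free_vars \<phi> \<and>
          (\<forall>e. sat e \<phi> \<longleftrightarrow> sat e \<psi>)))"

end

theory Submission
  imports Defs
begin


abbreviation zf :: "'v::group_add \<Rightarrow> 'v" where "zf \<equiv> (\<lambda>x. 0)"

locale cnvs =
  fixes F :: "('v::group_add \<Rightarrow> 'v) set"
  assumes nvs: "near_vector_space F" and cF: "commutative_nvs F"
begin

abbreviation "Q \<equiv> quasi_kernel F"

lemmas P = nvs[unfolded near_vector_space_def]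
lemmas P1 = P[THEN conjunct1] and P2 = P[THEN conjunct2, THEN conjunct1]
  and P3 = P[THEN conjunct2, THEN conjunct2, THEN conjunct1]
  and P4 = P[THEN conjunct2, THEN conjunct2, THEN conjunct2, THEN conjunct1]
  and P5 = P[THEN conjunct2, THEN conjunct2, THEN conjunct2, THEN conjunct2, THEN conjunct1]
  and P6 = P[THEN conjunct2, THEN conjunct2, THEN conjunct2, THEN conjunct2, THEN conjunct2, THEN conjunct1]
  and P7 = P[THEN conjunct2, THEN conjunct2, THEN conjunct2, THEN conjunct2, THEN conjunct2, THEN conjunct2, THEN conjunct1]
  and P8 = P[THEN conjunct2, THEN conjunct2, THEN conjunct2, THEN conjunct2, THEN conjunct2, THEN conjunct2, THEN conjunct2]
lemma hom: "\<alpha> \<in> F \<Longrightarrow> \<alpha> (x + y) = \<alpha> x + \<alpha> y"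
  using P1 by blast
lemma hom0[simp]: "\<alpha> \<in> F \<Longrightarrow> \<alpha> 0 = 0"
proof -
  assume a: "\<alpha> \<in> F"
  have "\<alpha> 0 + \<alpha> 0 = \<alpha> 0 + 0" using hom[OF a, of 0 0] by simp
  then show ?thesis by (rule add_left_imp_eq)
qed
lemma homm: "\<alpha> \<in> F \<Longrightarrow> \<alpha> (- x) = - \<alpha> x"
proof -
  assume a: "\<alpha> \<in> F"
  have "\<alpha> (x + - x) = \<alpha> x + \<alpha> (- x)" by (rule hom[OF a])
  then have "\<alpha> x + \<alpha> (- x) = 0" using a by simp
  then show ?thesis by (rule minus_unique[symmetric])
qed
lemma zfF[simp]: "zf \<in> F" and idF[simp]: "id \<in> F" and umF[simp]: "uminus \<in> F"
  using P2 P3 P4 by auto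
lemma bijF: "\<alpha> \<in> F \<Longrightarrow> \<alpha> \<noteq> zf \<Longrightarrow> bij \<alpha>"
  using P5 by blast
lemma invF: "\<alpha> \<in> F \<Longrightarrow> \<alpha> \<noteq> zf \<Longrightarrow> inv \<alpha> \<in> F"
  using P5 by blast
lemma inv1[simp]: "\<alpha> \<in> F \<Longrightarrow> \<alpha> \<noteq> zf \<Longrightarrow> inv \<alpha> (\<alpha> x) = x"
  using bijF bij_is_inj inv_f_f by metis
lemma inv2[simp]: "\<alpha> \<in> F \<Longrightarrow> \<alpha> \<noteq> zf \<Longrightarrow> \<alpha> (inv \<alpha> x) = x"
  using bijF bij_is_surj surj_f_inv_f by metis
lemma compF: "\<alpha> \<in> F \<Longrightarrow> \<beta> \<in> F \<Longrightarrow> \<alpha> \<circ> \<beta> \<in> F"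
proof (cases "\<alpha> = zf \<or> \<beta> = zf")
  case True
  assume a: "\<alpha> \<in> F" "\<beta> \<in> F"
  then have "\<alpha> \<circ> \<beta> = zf" using True by (auto simp: fun_eq_iff)
  then show ?thesis by simp
next
  case False
  assume a: "\<alpha> \<in> F" "\<beta> \<in> F"
  then show ?thesis using P6 False by blast
qed
lemma fpf: "\<alpha> \<in> F \<Longrightarrow> \<beta> \<in> F \<Longrightarrow> \<alpha> x = \<beta> x \<Longrightarrow> x \<noteq> 0 \<Longrightarrow> \<alpha> = \<beta>"
  using P7 by blast
lemma nz: "\<alpha> \<in> F \<Longrightarrow> \<alpha> x = 0 \<Longrightarrow> x \<noteq> 0 \<Longrightarrow> \<alpha> = zf"
  using fpf[of \<alpha> zf x] by simp
lemma commF: "\<alpha> \<in> F \<Longrightarrow> \<beta> \<in> F \<Longrightarrow> \<alpha> (\<beta> v) = \<beta> (\<alpha> v)"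
  using cF unfolding commutative_nvs_def by blast
lemma genU: "gen_subgroup Q = UNIV"
  using P8 by blast

lemma acomm: "(x::'v) + y = y + x"
proof -
  have "- (a + b) = - a + - b" for a b :: 'v by (rule hom[OF umF])
  then have "- b + - a = - a + - b" for a b :: 'v by (simp add: minus_add)
  from this[of "-y" "-x"] show ?thesis by simp
qed
lemma alcomm: "(x::'v) + (y + z) = y + (x + z)"
  by (simp add: add.assoc[symmetric] acomm[of x y])

lemma gen_sub: "0 \<in> H \<Longrightarrow> (\<forall>x\<in>H. \<forall>y\<in>H. x + y \<in> H) \<Longrightarrow> (\<forall>x\<in>H. - x \<in> H) \<Longrightarrow> S \<subseteq> H \<Longrightarrow> gen_subgroup S \<subseteq> H"
  unfolding gen_subgroup_def by blast
lemma gen_sup: "S \<subseteq> gen_subgroup S"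
  unfolding gen_subgroup_def by blast


lemmas ac = add.assoc acomm alcomm

lemma swap4: "((a::'v) + b) + (c + d) = (a + c) + (b + d)"
  by (simp add: ac)
lemma eq_move: "(x::'v) + y = z + w \<Longrightarrow> x + - z = w + - y"
proof -
  assume h: "x + y = z + w"
  have "x = x + y + - y" by (simp add: add.assoc)
  also have "\<dots> = z + w + - y" using h by (rule arg_cong[where f="\<lambda>t. t + - y"])
  also have "\<dots> = z + (w + - y)" by (rule add.assoc)
  finally have x: "x = z + (w + - y)" .
  have "x + - z = (w + - y) + z + - z" unfolding x by (simp only: acomm[of z])
  also have "\<dots> = w + - y" by (simp only: add.assoc add.right_inverse add_0_right)
  finally show ?thesis .
qed

definition pl :: "'v \<Rightarrow> ('v \<Rightarrow> 'v) \<Rightarrow> ('v \<Rightarrow> 'v) \<Rightarrow> ('v \<Rightarrow> 'v)" where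
  "pl q a b = (SOME g. g \<in> F \<and> a q + b q = g q)"
definition same :: "'v \<Rightarrow> 'v \<Rightarrow> bool" where
  "same p q \<longleftrightarrow> (\<forall>a\<in>F. \<forall>b\<in>F. \<forall>g\<in>F. (a p + b p = g p) = (a q + b q = g q))"
definition cls :: "'v \<Rightarrow> 'v set" where
  "cls q = {p \<in> Q. p = 0 \<or> same p q}"

lemma same_refl: "same p p" by (simp add: same_def)
lemma same_sym: "same p q \<Longrightarrow> same q p" by (simp add: same_def)
lemma same_trans: "same p q \<Longrightarrow> same q r \<Longrightarrow> same p r" by (simp add: same_def)

lemma Q0: "0 \<in> Q"
  unfolding quasi_kernel_def by (auto intro!: bexI[of _ zf])
lemma QD: "q \<in> Q \<Longrightarrow> a \<in> F \<Longrightarrow> b \<in> F \<Longrightarrow> \<exists>g\<in>F. a q + b q = g q"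
  unfolding quasi_kernel_def by blast
lemma plF: "q \<in> Q \<Longrightarrow> a \<in> F \<Longrightarrow> b \<in> F \<Longrightarrow> pl q a b \<in> F"
  and plE: "q \<in> Q \<Longrightarrow> a \<in> F \<Longrightarrow> b \<in> F \<Longrightarrow> a q + b q = pl q a b q"
  using someI_ex[OF QD[unfolded Bex_def]] unfolding pl_def by blast+

lemma pl_iff: "q \<in> Q \<Longrightarrow> q \<noteq> 0 \<Longrightarrow> a \<in> F \<Longrightarrow> b \<in> F \<Longrightarrow> g \<in> F \<Longrightarrow>
   (a q + b q = g q) = (g = pl q a b)"
  by (metis fpf plE plF)

lemma smul_Q: "l \<in> F \<Longrightarrow> q \<in> Q \<Longrightarrow> l q \<in> Q"
proof -
  assume l: "l \<in> F" and q: "q \<in> Q"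
  show ?thesis unfolding quasi_kernel_def
  proof (intro CollectI ballI)
    fix a b assume a: "a \<in> F" and b: "b \<in> F"
    obtain g where g: "g \<in> F" "a q + b q = g q" using QD[OF q a b] by blast
    have "a (l q) + b (l q) = l (a q + b q)" using a b l by (simp add: hom commF)
    also have "\<dots> = g (l q)" using g l by (simp add: commF)
    finally show "\<exists>g\<in>F. a (l q) + b (l q) = g (l q)" using g by blast
  qed
qed

lemma smul_same: "l \<in> F \<Longrightarrow> l \<noteq> zf \<Longrightarrow> same (l q) q"
proof -
  assume l: "l \<in> F" "l \<noteq> zf"
  have inj: "inj l" using bijF[OF l] bij_is_inj by blast
  show ?thesis unfolding same_def
  proof (intro ballI)
    fix a b g assume a: "a \<in> F" and b: "b \<in> F" and g: "g \<in> F"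
    have "a (l q) + b (l q) = l (a q + b q)" using a b l by (simp add: hom commF)
    moreover have "g (l q) = l (g q)" using g l by (simp add: commF)
    ultimately show "(a (l q) + b (l q) = g (l q)) = (a q + b q = g q)"
      using inj by (simp add: inj_eq)
  qed
qed

lemma um_nz: "(p::'v) \<noteq> 0 \<Longrightarrow> (uminus :: 'v \<Rightarrow> 'v) \<noteq> zf"
proof
  assume "p \<noteq> 0" "(uminus :: 'v \<Rightarrow> 'v) = zf"
  then have "- p = 0" by (metis)
  then show False using \<open>p \<noteq> 0\<close> by simp
qed

lemma sum_same:
  assumes p: "p \<in> Q" "p \<noteq> 0" and q: "q \<in> Q" "q \<noteq> 0" and pq: "p + q \<in> Q"
  shows "same p q"
proof (cases "\<exists>m\<in>F. m \<noteq> zf \<and> p = m q")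
  case True
  then show ?thesis using smul_same by blast
next
  case False
  have key: "pl p a b = pl q a b" if a: "a \<in> F" and b: "b \<in> F" for a b
  proof -
    define A where "A = pl p a b"
    define B where "B = pl q a b"
    define G where "G = pl (p + q) a b"
    have AF: "A \<in> F" and BF: "B \<in> F" and GF: "G \<in> F"
      using plF p q pq a b unfolding A_def B_def G_def by auto
    have "A p + B q = (a p + b p) + (a q + b q)"
      using plE p q a b unfolding A_def B_def by simp
    also have "\<dots> = a (p + q) + b (p + q)" using a b by (simp add: hom swap4)
    also have "\<dots> = G (p + q)" using plE pq a b unfolding G_def by simp
    also have "\<dots> = G p + G q" using GF by (simp add: hom)
    finally have e: "A p + - G p = G q + - B q" by (rule eq_move)
    have mGF: "uminus \<circ> G \<in> F" and mBF: "uminus \<circ> B \<in> F" using GF BF compF by auto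
    define D where "D = pl p A (uminus \<circ> G)"
    define D' where "D' = pl q G (uminus \<circ> B)"
    have DF: "D \<in> F" and D'F: "D' \<in> F" using plF p q AF GF mGF mBF unfolding D_def D'_def by auto
    have Dp: "D p = A p + - G p" using plE[OF p(1) AF mGF] unfolding D_def by simp
    have D'q: "D' q = G q + - B q" using plE[OF q(1) GF mBF] unfolding D'_def by simp
    have DD: "D p = D' q" using e Dp D'q by simp
    show ?thesis
    proof (cases "D = zf")
      case True
      then have "A p + - G p = 0" using Dp by simp
      then have "A p = G p" by (simp add: add_eq_0_iff2)
      then have AG: "A = G" using fpf AF GF p by blast
      have "D' q = 0" using DD True by simp
      then have "G q + - B q = 0" using D'q by simp
      then have "G q = B q" by (simp add: add_eq_0_iff2)
      then have "G = B" using fpf GF BF q by blast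
      then show ?thesis using AG unfolding A_def B_def by simp
    next
      case False
      have "p = inv D (D p)" using DF False by simp
      then have "p = inv D (D' q)" using DD by simp
      then have "p = (inv D \<circ> D') q" by simp
      moreover have "inv D \<circ> D' \<in> F" using compF invF DF D'F False by blast
      moreover have "inv D \<circ> D' \<noteq> zf"
      proof
        assume "inv D \<circ> D' = zf"
        then have "(inv D \<circ> D') q = 0" by simp
        then show False using \<open>p = (inv D \<circ> D') q\<close> p(2) by simp
      qed
      ultimately show ?thesis using \<open>\<not> (\<exists>m\<in>F. m \<noteq> zf \<and> p = m q)\<close> by blast
    qed
  qed
  show ?thesis unfolding same_def
  proof (intro ballI)
    fix a b g assume a: "a \<in> F" and b: "b \<in> F" and g: "g \<in> F"
    show "(a p + b p = g p) = (a q + b q = g q)"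
      using pl_iff[OF p a b g] pl_iff[OF q a b g] key[OF a b] by simp
  qed
qed

lemma add_same_Q: "p \<in> Q \<Longrightarrow> same p q \<Longrightarrow> p + q \<in> Q"
proof -
  assume p: "p \<in> Q" and s: "same p q"
  show ?thesis unfolding quasi_kernel_def
  proof (intro CollectI ballI)
    fix a b assume a: "a \<in> F" and b: "b \<in> F"
    have "a p + b p = pl p a b p" using plE[OF p a b] .
    then have "a q + b q = pl p a b q" using s plF[OF p a b] a b unfolding same_def by blast
    then have "a (p + q) + b (p + q) = pl p a b (p + q)"
    proof -
      assume h: "a q + b q = pl p a b q"
      have "a (p + q) + b (p + q) = (a p + a q) + (b p + b q)" using a b by (simp only: hom)
      also have "\<dots> = (a p + b p) + (a q + b q)" by (rule swap4)
      also have "\<dots> = pl p a b p + pl p a b q" using h plE[OF p a b] by simp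
      also have "\<dots> = pl p a b (p + q)" using plF[OF p a b] by (simp add: hom)
      finally show ?thesis .
    qed
    then show "\<exists>g\<in>F. a (p + q) + b (p + q) = g (p + q)" using plF[OF p a b] by blast
  qed
qed

lemma cls_Q: "p \<in> cls q \<Longrightarrow> p \<in> Q" by (simp add: cls_def)
lemma cls0[simp]: "0 \<in> cls q" by (simp add: cls_def Q0)
lemma cls_self: "q \<in> Q \<Longrightarrow> q \<in> cls q" by (simp add: cls_def same_refl)
lemma cls_smul: "l \<in> F \<Longrightarrow> p \<in> cls q \<Longrightarrow> l p \<in> cls q"
proof -
  assume l: "l \<in> F" and p: "p \<in> cls q"
  show ?thesis
  proof (cases "l = zf \<or> p = 0")
    case True then show ?thesis using l by auto
  next
    case False
    then have "same (l p) p" "same p q" using smul_same l p by (auto simp: cls_def)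
    then show ?thesis using smul_Q l p same_trans by (auto simp: cls_def)
  qed
qed
lemma cls_neg: "p \<in> cls q \<Longrightarrow> - p \<in> cls q"
  using cls_smul[OF umF] by simp
lemma cls_add: "p1 \<in> cls q \<Longrightarrow> p2 \<in> cls q \<Longrightarrow> p1 + p2 \<in> cls q"
proof -
  assume p1: "p1 \<in> cls q" and p2: "p2 \<in> cls q"
  show ?thesis
  proof (cases "p1 = 0 \<or> p2 = 0")
    case True then show ?thesis using p1 p2 by auto
  next
    case False
    have s1: "same p1 q" and s2: "same p2 q" and Q1: "p1 \<in> Q" and Q2: "p2 \<in> Q"
      using False p1 p2 by (auto simp: cls_def)
    have s12: "same p1 p2" using s1 s2 same_sym same_trans by blast
    have S: "p1 + p2 \<in> Q" using add_same_Q[OF Q1 s12] .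
    show ?thesis
    proof (cases "p1 + p2 = 0")
      case True then show ?thesis by simp
    next
      case nz: False
      have m2: "- p2 \<in> Q" "- p2 \<noteq> 0" using smul_Q[OF umF Q2] False by auto
      have "p1 + p2 + - p2 \<in> Q" using Q1 by (simp add: add.assoc)
      then have "same (p1 + p2) (- p2)" using sum_same[OF S nz m2] by simp
      moreover have "same (- p2) p2" using smul_same[OF umF um_nz[of p2]] False by simp
      ultimately have "same (p1 + p2) q" using s2 same_trans by blast
      then show ?thesis using S by (simp add: cls_def)
    qed
  qed
qed

lemma same_cls: "same p q \<Longrightarrow> cls p = cls q"
  unfolding cls_def using same_trans same_sym by blast

lemma is_block_cls: assumes q: "q \<in> Q" "q \<noteq> 0" shows "is_block F (cls q)"
proof -
  have g: "gen_subgroup (Q \<inter> cls q) = cls q"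
  proof -
    have "Q \<inter> cls q = cls q" using cls_Q by blast
    moreover have "gen_subgroup (cls q) \<subseteq> cls q"
      by (rule gen_sub) (auto intro: cls_add cls_neg)
    ultimately show ?thesis using gen_sup[of "cls q"] by simp
  qed
  have sub: "nv_subspace F (cls q)"
    unfolding nv_subspace_def using g by (auto intro: cls_add cls_neg cls_smul)
  have reg: "regular_subspace F (cls q)"
    unfolding regular_subspace_def
  proof (intro conjI sub ballI)
    fix u v assume u: "u \<in> Q \<inter> cls q - {0}" and v: "v \<in> Q \<inter> cls q - {0}"
    have "(id::'v\<Rightarrow>'v) \<noteq> zf" using v by (auto simp: fun_eq_iff)
    moreover have "u + id v \<in> Q" using cls_add[of u q v] u v cls_Q by simp
    ultimately show "\<exists>c\<in>F - {zf}. u + c v \<in> Q" using idF by blast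
  qed
  show ?thesis unfolding is_block_def
  proof (intro conjI reg allI impI)
    fix W' assume W': "regular_subspace F W' \<and> cls q \<subseteq> W'"
    have qW: "q \<in> W'" using W' cls_self[OF q(1)] by blast
    have R: "\<forall>u\<in>Q \<inter> W' - {0}. \<forall>v\<in>Q \<inter> W' - {0}. \<exists>c\<in>F - {zf}. u + c v \<in> Q"
      using W' unfolding regular_subspace_def by (elim conjE) assumption
    have "Q \<inter> W' \<subseteq> cls q"
    proof
      fix p assume p: "p \<in> Q \<inter> W'"
      show "p \<in> cls q"
      proof (cases "p = 0")
        case True then show ?thesis by simp
      next
        case False
        have "p \<in> Q \<inter> W' - {0}" "q \<in> Q \<inter> W' - {0}" using p False q qW by auto
        then obtain c where c: "c \<in> F" "c \<noteq> zf" "p + c q \<in> Q"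
          using R by blast
        have cq: "c q \<in> Q" "c q \<noteq> 0" using smul_Q c q nz by auto
        have "same p (c q)" using sum_same[OF _ False cq] p c by blast
        then have "same p q" using smul_same[OF c(1,2)] same_trans by blast
        then show ?thesis using p by (simp add: cls_def)
      qed
    qed
    then have "gen_subgroup (Q \<inter> W') \<subseteq> cls q"
      by (intro gen_sub) (auto intro: cls_add cls_neg)
    moreover have "gen_subgroup (Q \<inter> W') = W'"
      using W' unfolding regular_subspace_def nv_subspace_def by (elim conjE) assumption
    ultimately show "W' = cls q" using W' by blast
  qed
qed


lemma cls_pl: "p \<in> Q \<Longrightarrow> w \<in> cls p \<Longrightarrow> c \<in> F \<Longrightarrow> d \<in> F \<Longrightarrow> c w + d w = pl p c d w"
proof (cases "w = 0")
  case True
  assume "p \<in> Q" "c \<in> F" "d \<in> F"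
  then show ?thesis using True plF by simp
next
  case False
  assume p: "p \<in> Q" and w: "w \<in> cls p" and c: "c \<in> F" and d: "d \<in> F"
  have "same w p" using w False by (simp add: cls_def)
  then show ?thesis using plE[OF p c d] plF[OF p c d] c d unfolding same_def by blast
qed

definition tdef :: "('v \<Rightarrow> 'v) \<Rightarrow> bool" where
  "tdef r \<longleftrightarrow> (\<exists>T. \<forall>t. (\<forall>e. tm_eval e (T t) = r (tm_eval e t)) \<and> tm_vars (T t) = tm_vars t
      \<and> tm_syms (T t) \<subseteq> F \<union> tm_syms t)"

definition good :: "('v \<Rightarrow> 'v) \<Rightarrow> bool" where
  "good r \<longleftrightarrow> (\<forall>x y. r (x + y) = r x + r y) \<and> (\<forall>l\<in>F. \<forall>x. r (l x) = l (r x))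
     \<and> (\<forall>p\<in>Q - {0}. \<exists>c\<in>F. \<forall>w\<in>cls p. r w = c w) \<and> tdef r"

lemma good_hom: "good r \<Longrightarrow> r (x + y) = r x + r y" by (simp add: good_def)
lemma good_0: "good r \<Longrightarrow> r 0 = 0"
proof -
  assume g: "good r"
  have "r 0 + r 0 = r 0 + 0" using good_hom[OF g, of 0 0] by simp
  then show ?thesis by (rule add_left_imp_eq)
qed
lemma good_neg: "good r \<Longrightarrow> r (- x) = - r x"
proof -
  assume g: "good r"
  have "r x + r (- x) = 0" using good_hom[OF g, of x "-x"] good_0[OF g] by simp
  then show ?thesis by (rule minus_unique[symmetric])
qed
lemma good_comm: "good r \<Longrightarrow> l \<in> F \<Longrightarrow> r (l x) = l (r x)" by (simp add: good_def)
lemma good_sc: "good r \<Longrightarrow> p \<in> Q \<Longrightarrow> p \<noteq> 0 \<Longrightarrow> \<exists>c\<in>F. \<forall>w\<in>cls p. r w = c w" by (simp add: good_def)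
lemma good_cls: "good r \<Longrightarrow> p \<in> Q \<Longrightarrow> p \<noteq> 0 \<Longrightarrow> w \<in> cls p \<Longrightarrow> r w \<in> cls p"
proof -
  assume "good r" "p \<in> Q" "p \<noteq> 0" "w \<in> cls p"
  then obtain c where "c \<in> F" "\<forall>w\<in>cls p. r w = c w" using good_sc by blast
  then show ?thesis using cls_smul \<open>w \<in> cls p\<close> by simp
qed
lemma good_tdef: "good r \<Longrightarrow> tdef r" by (simp add: good_def)

lemma good_F: "l \<in> F \<Longrightarrow> good l"
  unfolding good_def
proof (intro conjI allI ballI)
  assume l: "l \<in> F"
  show "l (x + y) = l x + l y" for x y using hom[OF l] .
  show "l (m x) = m (l x)" if "m \<in> F" for m x using commF[OF l that] .
  show "\<exists>c\<in>F. \<forall>w\<in>cls p. l w = c w" for p using l by blast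
  show "tdef l" unfolding tdef_def
    by (rule exI[of _ "\<lambda>t. Scal l t"]) (use l in auto)
qed

lemma good_add: "good r \<Longrightarrow> good s \<Longrightarrow> good (\<lambda>x. r x + s x)"
proof -
  assume r: "good r" and s: "good s"
  have h1: "\<forall>x y. r (x + y) + s (x + y) = (r x + s x) + (r y + s y)"
    using good_hom[OF r] good_hom[OF s] by (simp add: swap4)
  have h2: "\<forall>l\<in>F. \<forall>x. r (l x) + s (l x) = l (r x + s x)"
    using good_comm[OF r] good_comm[OF s] hom by simp
  have h3: "\<forall>p\<in>Q - {0}. \<exists>c\<in>F. \<forall>w\<in>cls p. r w + s w = c w"
  proof
    fix p assume p: "p \<in> Q - {0}"
    obtain c where c: "c \<in> F" "\<forall>w\<in>cls p. r w = c w" using good_sc[OF r] p by blast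
    obtain d where d: "d \<in> F" "\<forall>w\<in>cls p. s w = d w" using good_sc[OF s] p by blast
    have "\<forall>w\<in>cls p. r w + s w = pl p c d w" using cls_pl[OF _ _ c(1) d(1)] c d p by simp
    then show "\<exists>c\<in>F. \<forall>w\<in>cls p. r w + s w = c w" using plF[OF _ c(1) d(1)] p by blast
  qed
  obtain T1 where T1: "\<forall>t. (\<forall>e. tm_eval e (T1 t) = r (tm_eval e t)) \<and> tm_vars (T1 t) = tm_vars t
    \<and> tm_syms (T1 t) \<subseteq> F \<union> tm_syms t" using good_tdef[OF r] unfolding tdef_def by blast
  obtain T2 where T2: "\<forall>t. (\<forall>e. tm_eval e (T2 t) = s (tm_eval e t)) \<and> tm_vars (T2 t) = tm_vars t
    \<and> tm_syms (T2 t) \<subseteq> F \<union> tm_syms t" using good_tdef[OF s] unfolding tdef_def by blast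
  have h4: "tdef (\<lambda>x. r x + s x)" unfolding tdef_def
    by (rule exI[of _ "\<lambda>t. Plus (T1 t) (T2 t)"]) (use T1 T2 in auto)
  show ?thesis unfolding good_def using h1 h2 h3 h4 by simp
qed

lemma good_comp: "good r \<Longrightarrow> good s \<Longrightarrow> good (r \<circ> s)"
proof -
  assume r: "good r" and s: "good s"
  have h1: "\<forall>x y. (r \<circ> s) (x + y) = (r \<circ> s) x + (r \<circ> s) y"
    using good_hom[OF r] good_hom[OF s] by simp
  have h2: "\<forall>l\<in>F. \<forall>x. (r \<circ> s) (l x) = l ((r \<circ> s) x)"
    using good_comm[OF r] good_comm[OF s] by simp
  have h3: "\<forall>p\<in>Q - {0}. \<exists>c\<in>F. \<forall>w\<in>cls p. (r \<circ> s) w = c w"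
  proof
    fix p assume p: "p \<in> Q - {0}"
    obtain c where c: "c \<in> F" "\<forall>w\<in>cls p. r w = c w" using good_sc[OF r] p by blast
    obtain d where d: "d \<in> F" "\<forall>w\<in>cls p. s w = d w" using good_sc[OF s] p by blast
    have "\<forall>w\<in>cls p. (r \<circ> s) w = (c \<circ> d) w" using c d cls_smul by simp
    then show "\<exists>c\<in>F. \<forall>w\<in>cls p. (r \<circ> s) w = c w" using compF[OF c(1) d(1)] by blast
  qed
  obtain T1 where T1: "\<forall>t. (\<forall>e. tm_eval e (T1 t) = r (tm_eval e t)) \<and> tm_vars (T1 t) = tm_vars t
    \<and> tm_syms (T1 t) \<subseteq> F \<union> tm_syms t" using good_tdef[OF r] unfolding tdef_def by blast
  obtain T2 where T2: "\<forall>t. (\<forall>e. tm_eval e (T2 t) = s (tm_eval e t)) \<and> tm_vars (T2 t) = tm_vars t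
    \<and> tm_syms (T2 t) \<subseteq> F \<union> tm_syms t" using good_tdef[OF s] unfolding tdef_def by blast
  have h4: "tdef (r \<circ> s)" unfolding tdef_def
  proof (rule exI[of _ "\<lambda>t. T1 (T2 t)"], intro allI conjI)
    fix t
    show "tm_eval e (T1 (T2 t)) = (r \<circ> s) (tm_eval e t)" for e using T1 T2 by simp
    show "tm_vars (T1 (T2 t)) = tm_vars t" using T1 T2 by simp
    show "tm_syms (T1 (T2 t)) \<subseteq> F \<union> tm_syms t" using T1[rule_format, of "T2 t"] T2[rule_format, of t] by blast
  qed
  show ?thesis unfolding good_def using h1 h2 h3 h4 by blast
qed

lemma sep:
  assumes p1: "p1 \<in> Q" "p1 \<noteq> 0" and p2: "p2 \<in> Q" "p2 \<noteq> 0" and ns: "\<not> same p1 p2"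
  shows "\<exists>f. good f \<and> (\<forall>w\<in>cls p1. f w = w) \<and> (\<forall>w\<in>cls p2. f w = 0)"
proof -
  obtain a b g where a: "a \<in> F" and b: "b \<in> F" and g: "g \<in> F"
    and d: "(a p1 + b p1 = g p1) \<noteq> (a p2 + b p2 = g p2)"
    using ns unfolding same_def by blast
  have ne: "pl p1 a b \<noteq> pl p2 a b"
    using d pl_iff[OF p1 a b g] pl_iff[OF p2 a b g] by metis
  define P2 where "P2 = pl p2 a b"
  have P2F: "P2 \<in> F" using plF[OF p2(1) a b] unfolding P2_def .
  have mP2: "uminus \<circ> P2 \<in> F" using compF[OF umF P2F] .
  define r where "r = (\<lambda>x. (a x + b x) + (uminus \<circ> P2) x)"
  have gr: "good r" unfolding r_def
    by (intro good_add good_F a b mP2)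
  have r2: "\<forall>w\<in>cls p2. r w = 0"
    using cls_pl[OF p2(1) _ a b] unfolding r_def P2_def by simp
  obtain c where c: "c \<in> F" "\<forall>w\<in>cls p1. r w = c w" using good_sc[OF gr p1] by blast
  have cnz: "c \<noteq> zf"
  proof
    assume "c = zf"
    then have "r p1 = 0" using c cls_self[OF p1(1)] by simp
    then have "pl p1 a b p1 + - P2 p1 = 0" unfolding r_def using plE[OF p1(1) a b] by simp
    then have "pl p1 a b p1 = P2 p1" by (simp add: add_eq_0_iff2)
    then have "pl p1 a b = P2" using fpf plF[OF p1(1) a b] P2F p1(2) by blast
    then show False using ne unfolding P2_def by simp
  qed
  define f where "f = inv c \<circ> r"
  have "good f" unfolding f_def by (intro good_comp good_F invF c cnz gr)
  moreover have "\<forall>w\<in>cls p1. f w = w" unfolding f_def using c cnz by simp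
  moreover have "\<forall>w\<in>cls p2. f w = 0" unfolding f_def using r2 invF[OF c(1) cnz] by simp
  ultimately show ?thesis by blast
qed

lemma reps:
  assumes fin: "finite {W. is_block F W}"
  shows "\<exists>(k::nat) q. (\<forall>i<k. q i \<in> Q \<and> q i \<noteq> 0) \<and> (\<forall>p\<in>Q - {0}. \<exists>i<k. same p (q i))
     \<and> (\<forall>i<k. \<forall>j<k. i \<noteq> j \<longrightarrow> \<not> same (q i) (q j))"
proof -
  have "cls ` (Q - {0}) \<subseteq> {W. is_block F W}"
  proof
    fix W assume "W \<in> cls ` (Q - {0})"
    then obtain p where "p \<in> Q" "p \<noteq> 0" "W = cls p" by blast
    then show "W \<in> {W. is_block F W}" using is_block_cls by simp
  qed
  then have "finite (cls ` (Q - {0}))" using fin by (rule finite_subset)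
  from finite_distinct_list[OF this] obtain Cs where Cs: "set Cs = cls ` (Q - {0})" "distinct Cs" by blast
  define q where "q i = (SOME p. p \<in> Q - {0} \<and> cls p = Cs ! i)" for i
  have qp: "q i \<in> Q - {0} \<and> cls (q i) = Cs ! i" if "i < length Cs" for i
  proof -
    have "Cs ! i \<in> cls ` (Q - {0})" using Cs(1) that nth_mem by blast
    then have "\<exists>p. p \<in> Q - {0} \<and> cls p = Cs ! i" by auto
    then show ?thesis unfolding q_def by (rule someI_ex)
  qed
  show ?thesis
  proof (rule exI[where x="length Cs"], rule exI[where x=q], intro conjI allI impI ballI)
    fix i assume "i < length Cs" then show "q i \<in> Q" "q i \<noteq> 0" using qp by auto
  next
    fix p assume p: "p \<in> Q - {0}"
    then have "cls p \<in> set Cs" unfolding Cs(1) by (rule imageI)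
    then obtain i where i: "i < length Cs" "Cs ! i = cls p" unfolding in_set_conv_nth by blast
    have "p \<in> cls p" using cls_self p by blast
    then have "p \<in> cls (q i)" using qp[OF i(1)] i(2) by simp
    then have "same p (q i)" using p by (simp add: cls_def)
    then show "\<exists>i<length Cs. same p (q i)" using i by blast
  next
    fix i j assume ij: "i < length Cs" "j < length Cs" "i \<noteq> j"
    show "\<not> same (q i) (q j)"
    proof
      assume "same (q i) (q j)"
      then have "cls (q i) = cls (q j)" by (rule same_cls)
      then have "Cs ! i = Cs ! j" using qp ij by simp
      then show False using Cs(2) ij nth_eq_iff_index_eq by blast
    qed
  qed
qed

end

locale blk = cnvs F for F :: "('v::group_add \<Rightarrow> 'v) set" +
  fixes k :: nat and q :: "nat \<Rightarrow> 'v" and e :: "nat \<Rightarrow> 'v \<Rightarrow> 'v"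
  assumes qQ: "i < k \<Longrightarrow> q i \<in> Q" and qnz: "i < k \<Longrightarrow> q i \<noteq> 0"
    and qcov: "p \<in> Q \<Longrightarrow> p \<noteq> 0 \<Longrightarrow> \<exists>i<k. same p (q i)"
    and egood: "i < k \<Longrightarrow> good (e i)"
    and efix: "i < k \<Longrightarrow> w \<in> cls (q i) \<Longrightarrow> e i w = w"
    and ekill: "i < k \<Longrightarrow> j < k \<Longrightarrow> j \<noteq> i \<Longrightarrow> w \<in> cls (q j) \<Longrightarrow> e i w = 0"
begin

lemma sl_hom: "good r \<Longrightarrow> r (sum_list (map f xs)) = sum_list (map (\<lambda>i. r (f i)) xs)"
  by (induction xs) (auto simp: good_0 good_hom)
lemma sl_add: "sum_list (map (\<lambda>i. (f i :: 'v) + g i) xs) = sum_list (map f xs) + sum_list (map g xs)"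
proof (induction xs)
  case (Cons a xs)
  have "sum_list (map (\<lambda>i. f i + g i) (a # xs)) = (f a + g a) + (sum_list (map f xs) + sum_list (map g xs))"
    using Cons by simp
  also have "\<dots> = (f a + sum_list (map f xs)) + (g a + sum_list (map g xs))" by (rule swap4)
  finally show ?case by simp
qed simp
lemma sl_neg: "sum_list (map (\<lambda>i. - f i) xs) = - sum_list (map f xs :: 'v list)"
proof (induction xs)
  case (Cons a xs)
  then show ?case by (simp only: list.map sum_list.Cons minus_add acomm[of "- sum_list (map f xs)"])
qed simp
lemma sl_zero: "sum_list (map (\<lambda>i. (0::'v)) xs) = 0"
  by (induction xs) auto
lemma sl_single: "distinct xs \<Longrightarrow> j \<in> set xs \<Longrightarrow> (\<forall>i\<in>set xs. i \<noteq> j \<longrightarrow> f i = 0)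
   \<Longrightarrow> sum_list (map f xs) = (f j :: 'v)"
proof (induction xs)
  case Nil then show ?case by simp
next
  case (Cons a xs)
  show ?case
  proof (cases "a = j")
    case True
    then have "\<forall>i\<in>set xs. f i = 0" using Cons.prems by auto
    then have "sum_list (map f xs) = 0" by (induction xs) auto
    then show ?thesis using True by simp
  next
    case False
    then show ?thesis using Cons by auto
  qed
qed

lemma eself: "i < k \<Longrightarrow> p \<in> cls (q j) \<Longrightarrow> j < k \<Longrightarrow> e i p = (if i = j then p else 0)"
  using efix ekill by auto

lemma dec: "x = sum_list (map (\<lambda>i. e i x) [0..<k]) \<and> (\<forall>i<k. e i x \<in> cls (q i))"
proof -
  define H where "H = {x. x = sum_list (map (\<lambda>i. e i x) [0..<k]) \<and> (\<forall>i<k. e i x \<in> cls (q i))}"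
  have e0: "\<forall>i<k. e i 0 = 0" using egood good_0 by blast
  have "sum_list (map (\<lambda>i. e i 0) [0..<k]) = sum_list (map (\<lambda>i. 0) [0..<k])"
    using e0 by (intro arg_cong[where f=sum_list] map_cong) auto
  then have H0: "0 \<in> H" unfolding H_def using e0 sl_zero cls0 by simp
  have "gen_subgroup Q \<subseteq> H"
  proof (rule gen_sub)
    show "0 \<in> H" by (rule H0)
    show "\<forall>x\<in>H. \<forall>y\<in>H. x + y \<in> H"
    proof (intro ballI)
      fix x y assume x: "x \<in> H" and y: "y \<in> H"
      have "sum_list (map (\<lambda>i. e i (x + y)) [0..<k]) = sum_list (map (\<lambda>i. e i x + e i y) [0..<k])"
        using egood good_hom by (intro arg_cong[where f=sum_list] map_cong) auto
      also have "\<dots> = x + y" using x y unfolding H_def by (simp add: sl_add)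
      finally have "sum_list (map (\<lambda>i. e i (x + y)) [0..<k]) = x + y" .
      moreover have "\<forall>i<k. e i (x + y) = e i x + e i y" using egood good_hom by blast
      ultimately show "x + y \<in> H" using x y cls_add unfolding H_def by auto
    qed
    show "\<forall>x\<in>H. - x \<in> H"
    proof (intro ballI)
      fix x assume x: "x \<in> H"
      have "sum_list (map (\<lambda>i. e i (- x)) [0..<k]) = sum_list (map (\<lambda>i. - e i x) [0..<k])"
        using egood good_neg by (intro arg_cong[where f=sum_list] map_cong) auto
      also have "\<dots> = - x" using x unfolding H_def by (simp add: sl_neg)
      finally have "sum_list (map (\<lambda>i. e i (- x)) [0..<k]) = - x" .
      moreover have "\<forall>i<k. e i (- x) = - e i x" using egood good_neg by blast
      ultimately show "- x \<in> H" using x cls_neg unfolding H_def by auto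
    qed
    show "Q \<subseteq> H"
    proof
      fix p assume p: "p \<in> Q"
      show "p \<in> H"
      proof (cases "p = 0")
        case True
        then show ?thesis using H0 by simp
      next
        case False
        obtain j where j: "j < k" "same p (q j)" using qcov p False by blast
        have pj: "p \<in> cls (q j)" using j p by (simp add: cls_def)
        have "sum_list (map (\<lambda>i. e i p) [0..<k]) = e j p"
          by (rule sl_single) (use j pj eself in auto)
        also have "\<dots> = p" using efix j pj by simp
        finally show ?thesis unfolding H_def using eself pj j by auto
      qed
    qed
  qed
  then show ?thesis using genU unfolding H_def by blast
qed

lemma proj: "\<forall>j<k. w j \<in> cls (q j) \<Longrightarrow> i < k \<Longrightarrow> e i (sum_list (map w [0..<k])) = w i"
proof -
  assume w: "\<forall>j<k. w j \<in> cls (q j)" and i: "i < k"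
  have "e i (sum_list (map w [0..<k])) = sum_list (map (\<lambda>j. e i (w j)) [0..<k])"
    by (rule sl_hom[OF egood[OF i], of w])
  also have "\<dots> = e i (w i)" by (rule sl_single) (use i w eself in auto)
  also have "\<dots> = w i" using efix i w by simp
  finally show ?thesis .
qed

lemma eq_iff: "x = y \<longleftrightarrow> (\<forall>i<k. e i x = e i y)"
proof
  assume h: "\<forall>i<k. e i x = e i y"
  have "x = sum_list (map (\<lambda>i. e i x) [0..<k])" using dec by blast
  also have "\<dots> = sum_list (map (\<lambda>i. e i y) [0..<k])"
    using h by (intro arg_cong[where f=sum_list] map_cong) auto
  also have "\<dots> = y" using dec[of y] by simp
  finally show "x = y" .
qed simp

end

context cnvs
begin

lemma fold_sep:
  assumes i: "i < k" and fp: "\<And>j. j < k \<Longrightarrow> j \<noteq> i \<Longrightarrow> good (f j) \<and> (\<forall>w\<in>cls (q i). f j w = w) \<and> (\<forall>w\<in>cls (q j). f j w = 0)"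
    and qQ: "\<And>j. j < k \<Longrightarrow> q j \<in> Q \<and> q j \<noteq> 0"
  shows "(\<forall>j\<in>set js. j < k \<and> j \<noteq> i) \<Longrightarrow> good (foldr (\<lambda>j acc. f j \<circ> acc) js id)
    \<and> (\<forall>w\<in>cls (q i). foldr (\<lambda>j acc. f j \<circ> acc) js id w = w)
    \<and> (\<forall>j\<in>set js. \<forall>w\<in>cls (q j). foldr (\<lambda>j acc. f j \<circ> acc) js id w = 0)"
proof (induction js)
  case Nil then show ?case using good_F[OF idF] by (simp add: id_def)
next
  case (Cons a js)
  define c where "c = foldr (\<lambda>j acc. f j \<circ> acc) js id"
  have "\<forall>j\<in>set js. j < k \<and> j \<noteq> i" using Cons.prems by simp
  note IH0 = Cons.IH[OF this, folded c_def]
  have IH: "good c" "\<forall>w\<in>cls (q i). c w = w" "\<forall>j\<in>set js. \<forall>w\<in>cls (q j). c w = 0"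
    using IH0 by blast+
  have a: "a < k" "a \<noteq> i" using Cons.prems by auto
  have fa: "good (f a)" "\<forall>w\<in>cls (q i). f a w = w" "\<forall>w\<in>cls (q a). f a w = 0" using fp[OF a] by auto
  have "foldr (\<lambda>j acc. f j \<circ> acc) (a # js) id = f a \<circ> c" unfolding c_def by (simp only: foldr.simps o_apply)
  moreover have "good (f a \<circ> c)" using good_comp fa IH by blast
  moreover have "\<forall>w\<in>cls (q i). (f a \<circ> c) w = w" using fa IH by simp
  moreover have "\<forall>j\<in>set (a # js). \<forall>w\<in>cls (q j). (f a \<circ> c) w = 0"
  proof (intro ballI)
    fix j w assume j: "j \<in> set (a # js)" and w: "w \<in> cls (q j)"
    show "(f a \<circ> c) w = 0"
    proof (cases "j \<in> set js")
      case True then show ?thesis using IH(3) w good_0[OF fa(1)] by simp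
    next
      case False
      then have "j = a" using j by simp
      have "c w \<in> cls (q a)" using good_cls[OF IH(1)] qQ[OF a(1)] w \<open>j = a\<close> by blast
      then show ?thesis using fa(3) by simp
    qed
  qed
  ultimately show ?case by (simp only:)
qed

lemma blk_exists:
  assumes fin: "finite {W. is_block F W}"
  shows "\<exists>k q e. blk F k q e"
proof -
  obtain k :: nat and q where kq: "\<forall>i<k. q i \<in> Q \<and> q i \<noteq> 0" "\<forall>p\<in>Q - {0}. \<exists>i<k. same p (q i)"
    "\<forall>i<k. \<forall>j<k. i \<noteq> j \<longrightarrow> \<not> same (q i) (q j)"
    using reps[OF fin] by blast
  define f where "f i j = (SOME f. good f \<and> (\<forall>w\<in>cls (q i). f w = w) \<and> (\<forall>w\<in>cls (q j). f w = 0))" for i j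
  have fp: "good (f i j) \<and> (\<forall>w\<in>cls (q i). f i j w = w) \<and> (\<forall>w\<in>cls (q j). f i j w = 0)"
    if "i < k" "j < k" "j \<noteq> i" for i j
  proof -
    have "\<exists>f. good f \<and> (\<forall>w\<in>cls (q i). f w = w) \<and> (\<forall>w\<in>cls (q j). f w = 0)"
      using sep kq that by metis
    then show ?thesis unfolding f_def by (rule someI_ex)
  qed
  define e where "e i = foldr (\<lambda>j acc. f i j \<circ> acc) (filter (\<lambda>j. j \<noteq> i) [0..<k]) id" for i
  have ep: "good (e i) \<and> (\<forall>w\<in>cls (q i). e i w = w)
    \<and> (\<forall>j\<in>set (filter (\<lambda>j. j \<noteq> i) [0..<k]). \<forall>w\<in>cls (q j). e i w = 0)" if i: "i < k" for i
    unfolding e_def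
    by (rule fold_sep[OF i, of "f i" q]) (use fp i kq in auto)
  have "blk F k q e"
  proof (intro blk.intro blk_axioms.intro)
    show "cnvs F" by (rule cnvs_axioms)
  next
    fix i assume "i < k" then show "q i \<in> Q" "q i \<noteq> 0" using kq by auto
  next
    fix p assume "p \<in> Q" "p \<noteq> 0" then show "\<exists>i<k. same p (q i)" using kq by auto
  next
    fix i assume "i < k" then show "good (e i)" using ep by blast
  next
    fix i w assume "i < k" "w \<in> cls (q i)" then show "e i w = w" using ep by blast
  next
    fix i j w assume "i < k" "j < k" "j \<noteq> i" "w \<in> cls (q j)" then show "e i w = 0" using ep by auto
  qed
  then show ?thesis by blast
qed

end


definition TT :: "'f fm" where "TT = Eq Zero Zero"
definition FF :: "'f fm" where "FF = Neg TT"
definition Disj :: "'f fm \<Rightarrow> 'f fm \<Rightarrow> 'f fm" where "Disj a b = Neg (Conj (Neg a) (Neg b))"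
definition Conjs :: "'f fm list \<Rightarrow> 'f fm" where "Conjs xs = foldr Conj xs TT"
definition Disjs :: "'f fm list \<Rightarrow> 'f fm" where "Disjs xs = foldr Disj xs FF"

lemma sat_TT[simp]: "sat r TT" by (simp add: TT_def)
lemma sat_FF[simp]: "\<not> sat r FF" by (simp add: FF_def)
lemma sat_Disj[simp]: "sat r (Disj a b) = (sat r a \<or> sat r b)" by (simp add: Disj_def)
lemma sat_Conjs[simp]: "sat r (Conjs xs) = (\<forall>a\<in>set xs. sat r a)"
  by (induction xs) (auto simp: Conjs_def)
lemma sat_Disjs[simp]: "sat r (Disjs xs) = (\<exists>a\<in>set xs. sat r a)"
  by (induction xs) (auto simp: Disjs_def)
lemma qf_TT[simp]: "qfree TT" and qf_FF[simp]: "qfree FF" by (simp_all add: TT_def FF_def)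
lemma qf_Disj[simp]: "qfree (Disj a b) = (qfree a \<and> qfree b)" by (simp add: Disj_def)
lemma qf_Conjs[simp]: "qfree (Conjs xs) = (\<forall>a\<in>set xs. qfree a)"
  by (induction xs) (auto simp: Conjs_def)
lemma qf_Disjs[simp]: "qfree (Disjs xs) = (\<forall>a\<in>set xs. qfree a)"
  by (induction xs) (auto simp: Disjs_def)
lemma fv_TT[simp]: "free_vars TT = {}" and fv_FF[simp]: "free_vars FF = {}" by (simp_all add: TT_def FF_def)
lemma fv_Disj[simp]: "free_vars (Disj a b) = free_vars a \<union> free_vars b" by (simp add: Disj_def)
lemma fv_Conjs[simp]: "free_vars (Conjs xs) = (\<Union>a\<in>set xs. free_vars a)"
  by (induction xs) (auto simp: Conjs_def)
lemma fv_Disjs[simp]: "free_vars (Disjs xs) = (\<Union>a\<in>set xs. free_vars a)"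
  by (induction xs) (auto simp: Disjs_def)
lemma fs_TT[simp]: "fm_syms TT = {}" and fs_FF[simp]: "fm_syms FF = {}" by (simp_all add: TT_def FF_def)
lemma fs_Disj[simp]: "fm_syms (Disj a b) = fm_syms a \<union> fm_syms b" by (simp add: Disj_def)
lemma fs_Conjs[simp]: "fm_syms (Conjs xs) = (\<Union>a\<in>set xs. fm_syms a)"
  by (induction xs) (auto simp: Conjs_def)
lemma fs_Disjs[simp]: "fm_syms (Disjs xs) = (\<Union>a\<in>set xs. fm_syms a)"
  by (induction xs) (auto simp: Disjs_def)

primrec atoms :: "'f fm \<Rightarrow> ('f tm \<times> 'f tm) list" where
  "atoms (Eq s t) = [(s, t)]"
| "atoms (Neg a) = atoms a"
| "atoms (Conj a b) = atoms a @ atoms b"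
| "atoms (Ex n a) = atoms a"

primrec map_atoms :: "('f tm \<Rightarrow> 'f tm \<Rightarrow> 'f fm) \<Rightarrow> 'f fm \<Rightarrow> 'f fm" where
  "map_atoms g (Eq s t) = g s t"
| "map_atoms g (Neg a) = Neg (map_atoms g a)"
| "map_atoms g (Conj a b) = Conj (map_atoms g a) (map_atoms g b)"
| "map_atoms g (Ex n a) = Ex n (map_atoms g a)"

lemma map_atoms_sat: "qfree a \<Longrightarrow> (\<forall>(s,t)\<in>set (atoms a). sat r (g s t) = sat r' (Eq s t))
   \<Longrightarrow> sat r (map_atoms g a) = sat r' a"
  by (induction a) auto
lemma map_atoms_qf: "qfree a \<Longrightarrow> (\<forall>(s,t)\<in>set (atoms a). qfree (g s t)) \<Longrightarrow> qfree (map_atoms g a)"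
  by (induction a) auto
lemma map_atoms_fv: "qfree a \<Longrightarrow> free_vars (map_atoms g a) \<subseteq> (\<Union>(s,t)\<in>set (atoms a). free_vars (g s t))"
  by (induction a) auto
lemma map_atoms_fs: "qfree a \<Longrightarrow> fm_syms (map_atoms g a) \<subseteq> (\<Union>(s,t)\<in>set (atoms a). fm_syms (g s t))"
  by (induction a) auto
lemma atoms_fv: "qfree a \<Longrightarrow> free_vars a = (\<Union>(s,t)\<in>set (atoms a). tm_vars s \<union> tm_vars t)"
  by (induction a) auto
lemma atoms_fs: "fm_syms a = (\<Union>(s,t)\<in>set (atoms a). tm_syms s \<union> tm_syms t)"
  by (induction a) auto

fun atleast :: "nat \<Rightarrow> 'f tm list \<Rightarrow> 'f fm" where
  "atleast N [] = (if N = 0 then TT else FF)"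
| "atleast N (t # ts) = Disj (atleast N ts) (Conj (Conjs (map (\<lambda>s. Neg (Eq t s)) ts)) (atleast (N - 1) ts))"

lemma atleast_sat: "sat r (atleast N ts) = (N \<le> card (set (map (tm_eval r) ts)))"
proof (induction ts arbitrary: N)
  case Nil then show ?case by simp
next
  case (Cons t ts)
  show ?case
  proof (cases "tm_eval r t \<in> set (map (tm_eval r) ts)")
    case True
    then show ?thesis using Cons by (auto simp: insert_absorb)
  next
    case False
    then have "card (set (map (tm_eval r) (t # ts))) = Suc (card (set (map (tm_eval r) ts)))"
      by simp
    moreover have "sat r (Conjs (map (\<lambda>s. Neg (Eq t s)) ts))" using False by auto
    ultimately show ?thesis using Cons by auto
  qed
qed
lemma atleast_qf: "qfree (atleast N ts)"
  by (induction N ts rule: atleast.induct) auto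
lemma atleast_fv: "free_vars (atleast N ts) \<subseteq> (\<Union>t\<in>set ts. tm_vars t)"
  by (induction N ts rule: atleast.induct) auto
lemma atleast_fs: "fm_syms (atleast N ts) \<subseteq> (\<Union>t\<in>set ts. tm_syms t)"
  by (induction N ts rule: atleast.induct) auto

primrec rest :: "nat \<Rightarrow> 'f tm \<Rightarrow> 'f tm" where
  "rest n (Var m) = (if m = n then Zero else Var m)"
| "rest n Zero = Zero"
| "rest n (Plus s t) = Plus (rest n s) (rest n t)"
| "rest n (Scal f t) = Scal f (rest n t)"

lemma rest_vars: "tm_vars (rest n t) = tm_vars t - {n}" by (induction t) auto
lemma rest_syms: "tm_syms (rest n t) = tm_syms t" by (induction t) auto
lemma rest_eval: "tm_eval (r(n := x)) (rest n t) = tm_eval r (rest n t)" by (induction t) auto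

fun choices :: "'a list list \<Rightarrow> 'a option list list" where
  "choices [] = [[]]"
| "choices (c # cs) = concat (map (\<lambda>ch. map (\<lambda>s. ch # s) (choices cs)) (None # map Some c))"

lemma choices_mem: "s \<in> set (choices Ls) \<longleftrightarrow> length s = length Ls \<and>
   (\<forall>i<length Ls. s ! i = None \<or> (\<exists>u. s ! i = Some u \<and> u \<in> set (Ls ! i)))"
proof (induction Ls arbitrary: s)
  case Nil then show ?case by simp
next
  case (Cons c cs)
  show ?case
  proof
    assume "s \<in> set (choices (c # cs))"
    then obtain ch s' where "s = ch # s'" "ch = None \<or> (\<exists>u\<in>set c. ch = Some u)" "s' \<in> set (choices cs)"
      by auto
    then show "length s = length (c # cs) \<and>
      (\<forall>i<length (c # cs). s ! i = None \<or> (\<exists>u. s ! i = Some u \<and> u \<in> set ((c # cs) ! i)))"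
      using Cons.IH by (auto simp: nth_Cons split: nat.split)
  next
    assume h: "length s = length (c # cs) \<and>
      (\<forall>i<length (c # cs). s ! i = None \<or> (\<exists>u. s ! i = Some u \<and> u \<in> set ((c # cs) ! i)))"
    then obtain ch s' where s: "s = ch # s'" by (cases s) auto
    have "length s' = length cs \<and> (\<forall>i<length cs. s' ! i = None \<or> (\<exists>u. s' ! i = Some u \<and> u \<in> set (cs ! i)))"
      using h s by auto
    then have "s' \<in> set (choices cs)" using Cons.IH by blast
    moreover have "ch = None \<or> (\<exists>u\<in>set c. ch = Some u)" using h s by (cases ch) force+
    ultimately show "s \<in> set (choices (c # cs))" using s by auto
  qed
qed



declare add_uminus_conv_diff[simp del]

context blk
begin

definition ET :: "nat \<Rightarrow> ('v \<Rightarrow> 'v) tm \<Rightarrow> ('v \<Rightarrow> 'v) tm" where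
  "ET i = (SOME T. \<forall>t. (\<forall>r. tm_eval r (T t) = e i (tm_eval r t)) \<and> tm_vars (T t) = tm_vars t
      \<and> tm_syms (T t) \<subseteq> F \<union> tm_syms t)"

lemma ET: assumes i: "i < k"
  shows "tm_eval r (ET i t) = e i (tm_eval r t)" "tm_vars (ET i t) = tm_vars t" "tm_syms (ET i t) \<subseteq> F \<union> tm_syms t"
proof -
  have "\<exists>T. \<forall>t. (\<forall>r. tm_eval r (T t) = e i (tm_eval r t)) \<and> tm_vars (T t) = tm_vars t
      \<and> tm_syms (T t) \<subseteq> F \<union> tm_syms t" using good_tdef[OF egood[OF i]] unfolding tdef_def .
  from someI_ex[OF this] have "\<forall>t. (\<forall>r. tm_eval r (ET i t) = e i (tm_eval r t)) \<and> tm_vars (ET i t) = tm_vars t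
      \<and> tm_syms (ET i t) \<subseteq> F \<union> tm_syms t" unfolding ET_def .
  then show "tm_eval r (ET i t) = e i (tm_eval r t)" "tm_vars (ET i t) = tm_vars t" "tm_syms (ET i t) \<subseteq> F \<union> tm_syms t"
    by blast+
qed

lemma dec_cls: "i < k \<Longrightarrow> e i x \<in> cls (q i)" using dec by blast

primrec coef :: "nat \<Rightarrow> nat \<Rightarrow> ('v \<Rightarrow> 'v) tm \<Rightarrow> ('v \<Rightarrow> 'v)" where
  "coef i n (Var m) = (if m = n then id else zf)"
| "coef i n Zero = zf"
| "coef i n (Plus s t) = pl (q i) (coef i n s) (coef i n t)"
| "coef i n (Scal f t) = f \<circ> coef i n t"

lemma coef_ok: "tm_syms t \<subseteq> F \<Longrightarrow> i < k \<Longrightarrow>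
  coef i n t \<in> F \<and> e i (tm_eval r t) = coef i n t (e i (r n)) + e i (tm_eval r (rest n t))"
proof (induction t)
  case (Var m)
  then show ?case using good_0[OF egood] by auto
next
  case Zero
  then show ?case using good_0[OF egood] by auto
next
  case (Plus s t)
  let ?w = "e i (r n)"
  have w: "?w \<in> cls (q i)" using dec_cls Plus by blast
  have s: "coef i n s \<in> F" "e i (tm_eval r s) = coef i n s ?w + e i (tm_eval r (rest n s))"
    using Plus by auto
  have t: "coef i n t \<in> F" "e i (tm_eval r t) = coef i n t ?w + e i (tm_eval r (rest n t))"
    using Plus by auto
  have "e i (tm_eval r (Plus s t)) = e i (tm_eval r s) + e i (tm_eval r t)"
    using good_hom[OF egood[OF Plus.prems(2)]] by simp
  also have "\<dots> = (coef i n s ?w + coef i n t ?w) + (e i (tm_eval r (rest n s)) + e i (tm_eval r (rest n t)))"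
    using s t swap4 by simp
  also have "\<dots> = coef i n (Plus s t) ?w + e i (tm_eval r (rest n (Plus s t)))"
    using cls_pl[OF qQ[OF Plus.prems(2)] w s(1) t(1)] good_hom[OF egood[OF Plus.prems(2)]] by simp
  finally show ?case using plF[OF qQ[OF Plus.prems(2)] s(1) t(1)] by simp
next
  case (Scal f t)
  let ?w = "e i (r n)"
  have f: "f \<in> F" using Scal.prems by simp
  have t: "coef i n t \<in> F" "e i (tm_eval r t) = coef i n t ?w + e i (tm_eval r (rest n t))"
    using Scal by auto
  have g: "good (e i)" using egood Scal.prems by blast
  have "e i (tm_eval r (Scal f t)) = f (e i (tm_eval r t))" using good_comm[OF g f] by simp
  also have "\<dots> = f (coef i n t ?w) + f (e i (tm_eval r (rest n t)))" using t hom[OF f] by simp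
  also have "\<dots> = coef i n (Scal f t) ?w + e i (tm_eval r (rest n (Scal f t)))"
    using good_comm[OF g f] by simp
  finally have "e i (tm_eval r (Scal f t)) = coef i n (Scal f t) ?w + e i (tm_eval r (rest n (Scal f t)))" .
  moreover have "coef i n (Scal f t) \<in> F" using compF[OF f t(1)] by (simp only: coef.simps)
  ultimately show ?case by blast
qed

definition BA :: "nat \<Rightarrow> nat \<Rightarrow> (nat \<Rightarrow> 'v) \<Rightarrow> ('v \<Rightarrow> 'v) tm \<Rightarrow> ('v \<Rightarrow> 'v) tm \<Rightarrow> 'v \<Rightarrow> bool" where
  "BA i n r s t w \<longleftrightarrow> coef i n s w + e i (tm_eval r (rest n s)) = coef i n t w + e i (tm_eval r (rest n t))"

lemma atom_BA: "tm_syms s \<subseteq> F \<Longrightarrow> tm_syms t \<subseteq> F \<Longrightarrow>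
  sat (r(n := x)) (Eq s t) \<longleftrightarrow> (\<forall>i<k. BA i n r s t (e i x))"
proof -
  assume s: "tm_syms s \<subseteq> F" and t: "tm_syms t \<subseteq> F"
  have "sat (r(n := x)) (Eq s t) \<longleftrightarrow> (\<forall>i<k. e i (tm_eval (r(n := x)) s) = e i (tm_eval (r(n := x)) t))"
    using eq_iff[of "tm_eval (r(n := x)) s" "tm_eval (r(n := x)) t"] by (simp only: sat.simps)
  also have "\<dots> \<longleftrightarrow> (\<forall>i<k. BA i n r s t (e i x))"
    unfolding BA_def using coef_ok[OF s, of _ n "r(n := x)"] coef_ok[OF t, of _ n "r(n := x)"]
    by (simp add: rest_eval)
  finally show ?thesis .
qed

definition dd :: "nat \<Rightarrow> nat \<Rightarrow> ('v \<Rightarrow> 'v) tm \<Rightarrow> ('v \<Rightarrow> 'v) tm \<Rightarrow> ('v \<Rightarrow> 'v)" where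
  "dd i n s t = pl (q i) (coef i n s) (uminus \<circ> coef i n t)"

definition cand :: "nat \<Rightarrow> nat \<Rightarrow> ('v \<Rightarrow> 'v) tm \<Rightarrow> ('v \<Rightarrow> 'v) tm \<Rightarrow> ('v \<Rightarrow> 'v) tm" where
  "cand i n s t = Scal (inv (dd i n s t)) (Plus (ET i (rest n t)) (Scal uminus (ET i (rest n s))))"

lemma eq_move_iff: "(x::'v) + y = z + w \<longleftrightarrow> x + - z = w + - y"
proof
  assume "x + y = z + w" then show "x + - z = w + - y" by (rule eq_move)
next
  assume h: "x + - z = w + - y"
  have "x + y = (x + - z) + (z + y)" by (simp add: add.assoc)
  also have "\<dots> = (w + - y) + (z + y)" using h by simp
  also have "\<dots> = w + z" by (simp add: add.assoc acomm[of z y])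
  also have "\<dots> = z + w" by (rule acomm)
  finally show "x + y = z + w" .
qed

lemma dd_F: "i < k \<Longrightarrow> tm_syms s \<subseteq> F \<Longrightarrow> tm_syms t \<subseteq> F \<Longrightarrow> dd i n s t \<in> F"
proof -
  assume i: "i < k" and s: "tm_syms s \<subseteq> F" and t: "tm_syms t \<subseteq> F"
  have cs: "coef i n s \<in> F" and ct: "coef i n t \<in> F" using coef_ok s t i by blast+
  show ?thesis unfolding dd_def using plF[OF qQ[OF i] cs compF[OF umF ct]] .
qed

lemma dd_w: "i < k \<Longrightarrow> tm_syms s \<subseteq> F \<Longrightarrow> tm_syms t \<subseteq> F \<Longrightarrow> w \<in> cls (q i) \<Longrightarrow>
   dd i n s t w = coef i n s w + - coef i n t w"
proof -
  assume i: "i < k" and s: "tm_syms s \<subseteq> F" and t: "tm_syms t \<subseteq> F" and w: "w \<in> cls (q i)"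
  have cs: "coef i n s \<in> F" and ct: "coef i n t \<in> F" using coef_ok s t i by blast+
  show ?thesis unfolding dd_def using cls_pl[OF qQ[OF i] w cs compF[OF umF ct]] by simp
qed

lemma BA_cand: assumes i: "i < k" and s: "tm_syms s \<subseteq> F" and t: "tm_syms t \<subseteq> F"
    and w: "w \<in> cls (q i)" and d: "dd i n s t \<noteq> zf"
  shows "BA i n r s t w \<longleftrightarrow> w = tm_eval r (cand i n s t)"
proof -
  let ?A = "e i (tm_eval r (rest n s))" and ?B = "e i (tm_eval r (rest n t))"
  have dF: "dd i n s t \<in> F" using dd_F i s t by blast
  have "BA i n r s t w \<longleftrightarrow> coef i n s w + - coef i n t w = ?B + - ?A"
    unfolding BA_def by (rule eq_move_iff)
  also have "\<dots> \<longleftrightarrow> dd i n s t w = ?B + - ?A" using dd_w[OF i s t w] by simp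
  also have "\<dots> \<longleftrightarrow> w = inv (dd i n s t) (?B + - ?A)"
  proof
    assume "dd i n s t w = ?B + - ?A"
    then have "inv (dd i n s t) (dd i n s t w) = inv (dd i n s t) (?B + - ?A)" by simp
    then show "w = inv (dd i n s t) (?B + - ?A)" using inv1[OF dF d] by simp
  next
    assume "w = inv (dd i n s t) (?B + - ?A)"
    then show "dd i n s t w = ?B + - ?A" using inv2[OF dF d] by simp
  qed
  also have "inv (dd i n s t) (?B + - ?A) = tm_eval r (cand i n s t)"
    unfolding cand_def using ET[OF i] by simp
  finally show ?thesis .
qed

lemma BA_zero: assumes i: "i < k" and s: "tm_syms s \<subseteq> F" and t: "tm_syms t \<subseteq> F"
    and w: "w \<in> cls (q i)" and d: "dd i n s t = zf"
  shows "BA i n r s t w \<longleftrightarrow> e i (tm_eval r (rest n s)) = e i (tm_eval r (rest n t))"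
proof -
  have "dd i n s t w = coef i n s w + - coef i n t w" by (rule dd_w[OF i s t w])
  then have "coef i n s w + - coef i n t w = 0" using d by simp
  then have "coef i n s w = coef i n t w" by (simp add: add_eq_0_iff2)
  then show ?thesis unfolding BA_def by simp
qed

lemma cand_cls: assumes i: "i < k" and s: "tm_syms s \<subseteq> F" and t: "tm_syms t \<subseteq> F"
    and d: "dd i n s t \<noteq> zf"
  shows "tm_eval r (cand i n s t) \<in> cls (q i)"
proof -
  have dF: "dd i n s t \<in> F" using dd_F i s t by blast
  show ?thesis unfolding cand_def using ET[OF i] dec_cls[OF i] cls_add cls_neg cls_smul invF[OF dF d]
    by simp
qed


definition nzat :: "nat \<Rightarrow> nat \<Rightarrow> (('v \<Rightarrow> 'v) tm \<times> ('v \<Rightarrow> 'v) tm) list \<Rightarrow> (('v \<Rightarrow> 'v) tm \<times> ('v \<Rightarrow> 'v) tm) list" where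
  "nzat i n as = filter (\<lambda>(s, t). dd i n s t \<noteq> zf) as"
definition cands :: "nat \<Rightarrow> nat \<Rightarrow> (('v \<Rightarrow> 'v) tm \<times> ('v \<Rightarrow> 'v) tm) list \<Rightarrow> ('v \<Rightarrow> 'v) tm list" where
  "cands i n as = map (\<lambda>(s, t). cand i n s t) (nzat i n as)"

definition thb :: "('v \<Rightarrow> 'v) tm option list \<Rightarrow> nat \<Rightarrow> nat \<Rightarrow> ('v \<Rightarrow> 'v) tm \<Rightarrow> ('v \<Rightarrow> 'v) tm \<Rightarrow> ('v \<Rightarrow> 'v) fm" where
  "thb sg i n s t = (case sg ! i of
      Some u \<Rightarrow> Eq (Plus (Scal (coef i n s) u) (ET i (rest n s))) (Plus (Scal (coef i n t) u) (ET i (rest n t)))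
    | None \<Rightarrow> (if dd i n s t = zf then Eq (ET i (rest n s)) (ET i (rest n t)) else FF))"

definition th :: "('v \<Rightarrow> 'v) tm option list \<Rightarrow> nat \<Rightarrow> ('v \<Rightarrow> 'v) tm \<Rightarrow> ('v \<Rightarrow> 'v) tm \<Rightarrow> ('v \<Rightarrow> 'v) fm" where
  "th sg n s t = Conjs (map (\<lambda>i. thb sg i n s t) [0..<k])"

definition avoid :: "nat \<Rightarrow> nat \<Rightarrow> (('v \<Rightarrow> 'v) tm \<times> ('v \<Rightarrow> 'v) tm) list \<Rightarrow> ('v \<Rightarrow> 'v) fm" where
  "avoid i n as = (if finite (cls (q i)) then Neg (atleast (card (cls (q i))) (cands i n as)) else TT)"

definition Cond :: "('v \<Rightarrow> 'v) tm option list \<Rightarrow> nat \<Rightarrow> (('v \<Rightarrow> 'v) tm \<times> ('v \<Rightarrow> 'v) tm) list \<Rightarrow> ('v \<Rightarrow> 'v) fm" where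
  "Cond sg n as = Conjs (map (\<lambda>i. avoid i n as) (filter (\<lambda>i. sg ! i = None) [0..<k]))"

definition elim :: "nat \<Rightarrow> ('v \<Rightarrow> 'v) fm \<Rightarrow> ('v \<Rightarrow> 'v) fm" where
  "elim n \<psi> = Disjs (map (\<lambda>sg. Conj (Cond sg n (atoms \<psi>)) (map_atoms (th sg n) \<psi>))
      (choices (map (\<lambda>i. cands i n (atoms \<psi>)) [0..<k])))"

definition okas :: "(('v \<Rightarrow> 'v) tm \<times> ('v \<Rightarrow> 'v) tm) list \<Rightarrow> bool" where
  "okas as \<longleftrightarrow> (\<forall>(s, t)\<in>set as. tm_syms s \<subseteq> F \<and> tm_syms t \<subseteq> F)"

lemma cands_mem: "u \<in> set (cands i n as) \<longleftrightarrow> (\<exists>s t. (s, t) \<in> set as \<and> dd i n s t \<noteq> zf \<and> u = cand i n s t)"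
  unfolding cands_def nzat_def by auto

lemma cands_cls: "i < k \<Longrightarrow> okas as \<Longrightarrow> u \<in> set (cands i n as) \<Longrightarrow> tm_eval r u \<in> cls (q i)"
  unfolding cands_mem okas_def using cand_cls by blast

lemma thb_ok:
  assumes i: "i < k" and s: "tm_syms s \<subseteq> F" and t: "tm_syms t \<subseteq> F" and w: "w \<in> cls (q i)"
    and sm: "\<And>u. sg ! i = Some u \<Longrightarrow> tm_eval r u = w"
    and nn: "sg ! i = None \<Longrightarrow> dd i n s t \<noteq> zf \<Longrightarrow> w \<noteq> tm_eval r (cand i n s t)"
  shows "sat r (thb sg i n s t) \<longleftrightarrow> BA i n r s t w"
proof (cases "sg ! i")
  case None
  show ?thesis
  proof (cases "dd i n s t = zf")
    case True
    then show ?thesis using None BA_zero[OF i s t w True] ET[OF i] unfolding thb_def by simp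
  next
    case False
    then show ?thesis using None BA_cand[OF i s t w False] nn unfolding thb_def by simp
  qed
next
  case (Some u)
  then show ?thesis using sm[OF Some] ET[OF i] unfolding thb_def BA_def by simp
qed

lemma sub_ok:
  assumes qf: "qfree \<psi>" and ok: "okas (atoms \<psi>)"
    and wc: "\<And>i. i < k \<Longrightarrow> w i \<in> cls (q i)"
    and sm: "\<And>i u. i < k \<Longrightarrow> sg ! i = Some u \<Longrightarrow> tm_eval r u = w i"
    and nn: "\<And>i u. i < k \<Longrightarrow> sg ! i = None \<Longrightarrow> u \<in> set (cands i n (atoms \<psi>)) \<Longrightarrow> tm_eval r u \<noteq> w i"
    and x: "\<And>i. i < k \<Longrightarrow> e i x = w i"
  shows "sat r (map_atoms (th sg n) \<psi>) \<longleftrightarrow> sat (r(n := x)) \<psi>"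
proof (rule map_atoms_sat[OF qf], intro ballI)
  fix p assume p: "p \<in> set (atoms \<psi>)"
  obtain s t where pst: "p = (s, t)" by (cases p)
  have s: "tm_syms s \<subseteq> F" and t: "tm_syms t \<subseteq> F" using ok p pst unfolding okas_def by auto
  have "sat r (th sg n s t) \<longleftrightarrow> (\<forall>i<k. BA i n r s t (w i))"
  proof -
    have "sat r (thb sg i n s t) \<longleftrightarrow> BA i n r s t (w i)" if i: "i < k" for i
    proof (rule thb_ok[OF i s t wc[OF i]])
      show "\<And>u. sg ! i = Some u \<Longrightarrow> tm_eval r u = w i" using sm i by blast
      show "w i \<noteq> tm_eval r (cand i n s t)" if "sg ! i = None" "dd i n s t \<noteq> zf"
        using nn[OF i that(1), of "cand i n s t"] that(2) p pst cands_mem by fastforce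
    qed
    then show ?thesis unfolding th_def by auto
  qed
  also have "\<dots> \<longleftrightarrow> sat (r(n := x)) (Eq s t)" using atom_BA[OF s t] x by simp
  finally show "case p of (s, t) \<Rightarrow> sat r (th sg n s t) = sat (r(n := x)) (Eq s t)" using pst by simp
qed

lemma avoid_ok:
  assumes i: "i < k" and ok: "okas as"
  shows "sat r (avoid i n as) \<longleftrightarrow> (\<exists>w\<in>cls (q i). \<forall>u\<in>set (cands i n as). tm_eval r u \<noteq> w)"
proof -
  let ?S = "set (map (tm_eval r) (cands i n as))"
  have S: "?S \<subseteq> cls (q i)" using cands_cls[OF i ok] by auto
  have fS: "finite ?S" by simp
  show ?thesis
  proof (cases "finite (cls (q i))")
    case True
    have "sat r (avoid i n as) \<longleftrightarrow> \<not> card (cls (q i)) \<le> card ?S"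
      unfolding avoid_def using True atleast_sat by simp
    also have "\<dots> \<longleftrightarrow> \<not> cls (q i) \<subseteq> ?S"
      using card_seteq[OF True S] card_mono[OF fS] by blast
    also have "\<dots> \<longleftrightarrow> (\<exists>w\<in>cls (q i). \<forall>u\<in>set (cands i n as). tm_eval r u \<noteq> w)" by force
    finally show ?thesis .
  next
    case False
    then have "infinite (cls (q i) - ?S)" using fS by (rule Diff_infinite_finite[rotated])
    then obtain w where "w \<in> cls (q i) - ?S" using infinite_imp_nonempty by blast
    then show ?thesis unfolding avoid_def using False by force
  qed
qed


lemma okas_atoms: "fm_syms \<psi> \<subseteq> F \<Longrightarrow> okas (atoms \<psi>)"
  unfolding okas_def using atoms_fs[of \<psi>] by blast

lemma elim_ok:
  assumes qf: "qfree \<psi>" and sy: "fm_syms \<psi> \<subseteq> F"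
  shows "sat r (elim n \<psi>) \<longleftrightarrow> (\<exists>x. sat (r(n := x)) \<psi>)"
proof
  let ?as = "atoms \<psi>"
  let ?Ls = "map (\<lambda>i. cands i n ?as) [0..<k]"
  have ok: "okas ?as" by (rule okas_atoms[OF sy])
  assume "sat r (elim n \<psi>)"
  then obtain sg where sg: "sg \<in> set (choices ?Ls)" and C: "sat r (Cond sg n ?as)"
    and M: "sat r (map_atoms (th sg n) \<psi>)"
    unfolding elim_def by auto
  have sgm: "length sg = k" "\<And>i. i < k \<Longrightarrow> sg ! i = None \<or> (\<exists>u. sg ! i = Some u \<and> u \<in> set (cands i n ?as))"
    using sg[unfolded choices_mem] by auto
  define w where "w i = (case sg ! i of Some u \<Rightarrow> tm_eval r u
     | None \<Rightarrow> (SOME w. w \<in> cls (q i) \<and> (\<forall>u\<in>set (cands i n ?as). tm_eval r u \<noteq> w)))" for i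
  have wN: "w i \<in> cls (q i) \<and> (\<forall>u\<in>set (cands i n ?as). tm_eval r u \<noteq> w i)"
    if i: "i < k" and N: "sg ! i = None" for i
  proof -
    have "sat r (avoid i n ?as)" using C i N unfolding Cond_def by auto
    then have "\<exists>w. w \<in> cls (q i) \<and> (\<forall>u\<in>set (cands i n ?as). tm_eval r u \<noteq> w)"
      using avoid_ok[OF i ok] by blast
    from someI_ex[OF this] show ?thesis unfolding w_def N by simp
  qed
  have wc: "w i \<in> cls (q i)" if i: "i < k" for i
  proof (cases "sg ! i")
    case None then show ?thesis using wN i by blast
  next
    case (Some u)
    then have "u \<in> set (cands i n ?as)" using sgm(2)[OF i] by auto
    then show ?thesis using cands_cls[OF i ok] Some unfolding w_def by simp
  qed
  define x where "x = sum_list (map w [0..<k])"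
  have ex: "e i x = w i" if "i < k" for i unfolding x_def using proj wc that by blast
  have "sat r (map_atoms (th sg n) \<psi>) \<longleftrightarrow> sat (r(n := x)) \<psi>"
  proof (rule sub_ok[OF qf ok wc _ _ ex])
    show "tm_eval r u = w i" if "i < k" "sg ! i = Some u" for i u using that unfolding w_def by simp
    show "tm_eval r u \<noteq> w i" if "i < k" "sg ! i = None" "u \<in> set (cands i n ?as)" for i u
      using wN that by blast
  qed
  then show "\<exists>x. sat (r(n := x)) \<psi>" using M by blast
next
  let ?as = "atoms \<psi>"
  let ?Ls = "map (\<lambda>i. cands i n ?as) [0..<k]"
  have ok: "okas ?as" by (rule okas_atoms[OF sy])
  assume "\<exists>x. sat (r(n := x)) \<psi>"
  then obtain x where X: "sat (r(n := x)) \<psi>" by blast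
  define P where "P i u \<longleftrightarrow> u \<in> set (cands i n ?as) \<and> tm_eval r u = e i x" for i u
  define sg where "sg = map (\<lambda>i. if \<exists>u. P i u then Some (SOME u. P i u) else None) [0..<k]"
  have sgi: "sg ! i = (if \<exists>u. P i u then Some (SOME u. P i u) else None)" if "i < k" for i
    unfolding sg_def using that by simp
  have sg: "sg \<in> set (choices ?Ls)"
    unfolding choices_mem
  proof (intro conjI allI impI)
    show "length sg = length ?Ls" unfolding sg_def by simp
    fix i assume "i < length ?Ls"
    then have i: "i < k" by simp
    show "sg ! i = None \<or> (\<exists>u. sg ! i = Some u \<and> u \<in> set (?Ls ! i))"
    proof (cases "\<exists>u. P i u")
      case True
      then have "P i (SOME u. P i u)" by (rule someI_ex)
      then show ?thesis using sgi[OF i] True i unfolding P_def by simp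
    next
      case False then show ?thesis using sgi[OF i] by simp
    qed
  qed
  have C: "sat r (Cond sg n ?as)"
    unfolding Cond_def sat_Conjs
  proof
    fix a assume "a \<in> set (map (\<lambda>i. avoid i n ?as) (filter (\<lambda>i. sg ! i = None) [0..<k]))"
    then obtain i where i: "i < k" "sg ! i = None" and a: "a = avoid i n ?as" by auto
    have "\<not> (\<exists>u. P i u)" using sgi[OF i(1)] i(2) by (auto split: if_splits)
    then have "\<forall>u\<in>set (cands i n ?as). tm_eval r u \<noteq> e i x" unfolding P_def by blast
    then show "sat r a" unfolding a using avoid_ok[OF i(1) ok] dec_cls[OF i(1)] by blast
  qed
  have "sat r (map_atoms (th sg n) \<psi>) \<longleftrightarrow> sat (r(n := x)) \<psi>"
  proof (rule sub_ok[OF qf ok dec_cls _ _ refl])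
    show "tm_eval r u = e i x" if "i < k" "sg ! i = Some u" for i u
    proof -
      have "\<exists>u. P i u" and "u = (SOME u. P i u)" using sgi[OF that(1)] that(2) by (auto split: if_splits)
      then have "P i u" using someI_ex by metis
      then show ?thesis unfolding P_def by blast
    qed
    show "tm_eval r u \<noteq> e i x" if "i < k" "sg ! i = None" "u \<in> set (cands i n ?as)" for i u
    proof -
      have "\<not> (\<exists>u. P i u)" using sgi[OF that(1)] that(2) by (auto split: if_splits)
      then show ?thesis using that(3) unfolding P_def by blast
    qed
  qed
  then have M: "sat r (map_atoms (th sg n) \<psi>)" using X by blast
  show "sat r (elim n \<psi>)" unfolding elim_def using sg C M by auto
qed


definition VA :: "(('v \<Rightarrow> 'v) tm \<times> ('v \<Rightarrow> 'v) tm) list \<Rightarrow> nat set" where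
  "VA as = (\<Union>(s, t)\<in>set as. tm_vars s \<union> tm_vars t)"

lemma cand_props: assumes i: "i < k" and s: "tm_syms s \<subseteq> F" and t: "tm_syms t \<subseteq> F"
    and d: "dd i n s t \<noteq> zf"
  shows "tm_syms (cand i n s t) \<subseteq> F" "tm_vars (cand i n s t) = (tm_vars s \<union> tm_vars t) - {n}"
proof -
  have dF: "dd i n s t \<in> F" using dd_F i s t by blast
  show "tm_syms (cand i n s t) \<subseteq> F" unfolding cand_def
    using ET(3)[OF i, of "rest n t"] ET(3)[OF i, of "rest n s"] invF[OF dF d] s t
    by (auto simp: rest_syms)
  show "tm_vars (cand i n s t) = (tm_vars s \<union> tm_vars t) - {n}" unfolding cand_def
    using ET(2)[OF i] by (auto simp: rest_vars)
qed

lemma cands_props: assumes i: "i < k" and ok: "okas as" and u: "u \<in> set (cands i n as)"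
  shows "tm_syms u \<subseteq> F" "tm_vars u \<subseteq> VA as - {n}"
proof -
  obtain s t where st: "(s, t) \<in> set as" "dd i n s t \<noteq> zf" "u = cand i n s t"
    using u cands_mem by blast
  have s: "tm_syms s \<subseteq> F" and t: "tm_syms t \<subseteq> F" using ok st(1) unfolding okas_def by auto
  show "tm_syms u \<subseteq> F" using cand_props(1)[OF i s t st(2)] st(3) by simp
  show "tm_vars u \<subseteq> VA as - {n}" using cand_props(2)[OF i s t st(2)] st unfolding VA_def by auto
qed

lemma thb_props: assumes i: "i < k" and ok: "okas as" and st: "(s, t) \<in> set as"
    and sg: "sg ! i = None \<or> (\<exists>u. sg ! i = Some u \<and> u \<in> set (cands i n as))"
  shows "qfree (thb sg i n s t)" "fm_syms (thb sg i n s t) \<subseteq> F" "free_vars (thb sg i n s t) \<subseteq> VA as - {n}"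
proof -
  have s: "tm_syms s \<subseteq> F" and t: "tm_syms t \<subseteq> F" using ok st unfolding okas_def by auto
  have cs: "coef i n s \<in> F" and ct: "coef i n t \<in> F" using coef_ok s t i by blast+
  have vst: "tm_vars s \<union> tm_vars t \<subseteq> VA as" using st unfolding VA_def by auto
  have ES: "tm_syms (ET i (rest n s)) \<subseteq> F" "tm_syms (ET i (rest n t)) \<subseteq> F"
    using ET(3)[OF i, of "rest n s"] ET(3)[OF i, of "rest n t"] s t by (auto simp: rest_syms)
  have EV: "tm_vars (ET i (rest n s)) \<subseteq> VA as - {n}" "tm_vars (ET i (rest n t)) \<subseteq> VA as - {n}"
    using ET(2)[OF i] vst by (auto simp: rest_vars)
  show "qfree (thb sg i n s t)" unfolding thb_def by (auto split: option.split)
  show "fm_syms (thb sg i n s t) \<subseteq> F"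
  proof (cases "sg ! i")
    case None then show ?thesis unfolding thb_def using ES by auto
  next
    case (Some u)
    then have "u \<in> set (cands i n as)" using sg by auto
    then have "tm_syms u \<subseteq> F" using cands_props[OF i ok] by blast
    then show ?thesis unfolding thb_def using ES cs ct Some by auto
  qed
  show "free_vars (thb sg i n s t) \<subseteq> VA as - {n}"
  proof (cases "sg ! i")
    case None then show ?thesis unfolding thb_def using EV by auto
  next
    case (Some u)
    then have "u \<in> set (cands i n as)" using sg by auto
    then have "tm_vars u \<subseteq> VA as - {n}" using cands_props[OF i ok] by blast
    then show ?thesis unfolding thb_def using EV Some by auto
  qed
qed

lemma avoid_props: assumes i: "i < k" and ok: "okas as"
  shows "qfree (avoid i n as)" "fm_syms (avoid i n as) \<subseteq> F" "free_vars (avoid i n as) \<subseteq> VA as - {n}"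
proof -
  show "qfree (avoid i n as)" unfolding avoid_def by (simp add: atleast_qf)
  have "fm_syms (atleast N (cands i n as)) \<subseteq> F" for N
    using atleast_fs[of N "cands i n as"] cands_props(1)[OF i ok] by blast
  then show "fm_syms (avoid i n as) \<subseteq> F" unfolding avoid_def by simp
  have "free_vars (atleast N (cands i n as)) \<subseteq> VA as - {n}" for N
    using atleast_fv[of N "cands i n as"] cands_props(2)[OF i ok] by blast
  then show "free_vars (avoid i n as) \<subseteq> VA as - {n}" unfolding avoid_def by simp
qed

lemma elim_props:
  assumes qf: "qfree \<psi>" and sy: "fm_syms \<psi> \<subseteq> F"
  shows "qfree (elim n \<psi>)" "fm_syms (elim n \<psi>) \<subseteq> F" "free_vars (elim n \<psi>) \<subseteq> free_vars \<psi> - {n}"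
proof -
  let ?as = "atoms \<psi>"
  let ?Ls = "map (\<lambda>i. cands i n ?as) [0..<k]"
  have ok: "okas ?as" by (rule okas_atoms[OF sy])
  have VA: "VA ?as = free_vars \<psi>" unfolding VA_def using atoms_fv[OF qf] by simp
  have sgp: "i < k \<Longrightarrow> sg ! i = None \<or> (\<exists>u. sg ! i = Some u \<and> u \<in> set (cands i n ?as))"
    if "sg \<in> set (choices ?Ls)" for sg i
    using that[unfolded choices_mem] by auto
  have P: "qfree a \<and> fm_syms a \<subseteq> F \<and> free_vars a \<subseteq> VA ?as - {n}"
    if a: "a \<in> set (map (\<lambda>sg. Conj (Cond sg n ?as) (map_atoms (th sg n) \<psi>)) (choices ?Ls))" for a
  proof -
    obtain sg where sg: "sg \<in> set (choices ?Ls)" and a: "a = Conj (Cond sg n ?as) (map_atoms (th sg n) \<psi>)"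
      using a by auto
    have C: "qfree (Cond sg n ?as) \<and> fm_syms (Cond sg n ?as) \<subseteq> F \<and> free_vars (Cond sg n ?as) \<subseteq> VA ?as - {n}"
      unfolding Cond_def using avoid_props[OF _ ok] by fastforce
    have T: "qfree (th sg n s t) \<and> fm_syms (th sg n s t) \<subseteq> F \<and> free_vars (th sg n s t) \<subseteq> VA ?as - {n}"
      if st: "(s, t) \<in> set ?as" for s t
      unfolding th_def using thb_props[OF _ ok st sgp[OF sg]] by fastforce
    have M1: "qfree (map_atoms (th sg n) \<psi>)" using map_atoms_qf[OF qf] T by fast
    have M2: "fm_syms (map_atoms (th sg n) \<psi>) \<subseteq> F" using map_atoms_fs[OF qf, of "th sg n"] T by fast
    have M3: "free_vars (map_atoms (th sg n) \<psi>) \<subseteq> VA ?as - {n}" using map_atoms_fv[OF qf, of "th sg n"] T by fast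
    show ?thesis using a C M1 M2 M3 by auto
  qed
  show "qfree (elim n \<psi>)" unfolding elim_def using P by auto
  show "fm_syms (elim n \<psi>) \<subseteq> F" unfolding elim_def using P by fastforce
  show "free_vars (elim n \<psi>) \<subseteq> free_vars \<psi> - {n}" unfolding elim_def using P VA by fastforce
qed

theorem QE: "admits_QE F"
  unfolding admits_QE_def
proof (intro allI impI)
  fix \<phi> :: "('v \<Rightarrow> 'v) fm"
  show "fm_syms \<phi> \<subseteq> F \<Longrightarrow> \<exists>\<psi>. qfree \<psi> \<and> fm_syms \<psi> \<subseteq> F \<and> free_vars \<psi> \<subseteq> free_vars \<phi> \<and> (\<forall>r. sat r \<phi> = sat r \<psi>)"
  proof (induction \<phi>)
    case (Eq s t)
    then show ?case by (intro exI[of _ "Eq s t"]) auto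
  next
    case (Neg \<phi>)
    then obtain \<psi> where "qfree \<psi> \<and> fm_syms \<psi> \<subseteq> F \<and> free_vars \<psi> \<subseteq> free_vars \<phi> \<and> (\<forall>r. sat r \<phi> = sat r \<psi>)"
      by auto
    then show ?case by (intro exI[of _ "Neg \<psi>"]) auto
  next
    case (Conj \<phi>1 \<phi>2)
    then obtain \<psi>1 \<psi>2 where "qfree \<psi>1 \<and> fm_syms \<psi>1 \<subseteq> F \<and> free_vars \<psi>1 \<subseteq> free_vars \<phi>1 \<and> (\<forall>r. sat r \<phi>1 = sat r \<psi>1)"
      "qfree \<psi>2 \<and> fm_syms \<psi>2 \<subseteq> F \<and> free_vars \<psi>2 \<subseteq> free_vars \<phi>2 \<and> (\<forall>r. sat r \<phi>2 = sat r \<psi>2)"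
      by auto
    then show ?case by (intro exI[of _ "Conj \<psi>1 \<psi>2"]) auto
  next
    case (Ex n \<phi>)
    then obtain \<psi> where \<psi>: "qfree \<psi>" "fm_syms \<psi> \<subseteq> F" "free_vars \<psi> \<subseteq> free_vars \<phi>" "\<forall>r. sat r \<phi> = sat r \<psi>"
      by auto
    have "qfree (elim n \<psi>)" "fm_syms (elim n \<psi>) \<subseteq> F" "free_vars (elim n \<psi>) \<subseteq> free_vars \<psi> - {n}"
      using elim_props[OF \<psi>(1,2)] by blast+
    moreover have "\<forall>r. sat r (Ex n \<phi>) = sat r (elim n \<psi>)"
      using elim_ok[OF \<psi>(1,2)] \<psi>(4) by simp
    ultimately show ?case using \<psi>(3) by (intro exI[of _ "elim n \<psi>"]) auto
  qed
qed

end

theorem mainTheorem16: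
  fixes F :: "('v::group_add \<Rightarrow> 'v) set"
  assumes "near_vector_space F"
    and "commutative_nvs F"
    and "finite {W. is_block F W}"
  shows "admits_QE F"
proof -
  interpret cnvs F using assms(1,2) by (rule cnvs.intro)
  obtain k q e where "blk F k q e" using blk_exists[OF assms(3)] by blast
  then interpret blk F k q e .
  show ?thesis by (rule QE)
qed

end
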